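(* Suppose there exists a subspace $\mathcal C\subseteq V$ of dimension $K$ with orthogonal projector $P$ that detects every error in $\mathcal E_\xi$ for each $\xi$ in a prescribed set $\mathcal S$ of irreducible types. Then there exist Hermitian matrices $A_\xi,B_\xi\in\mathbb C^{m_\xi\times m_\xi}$, for all types $\xi$ occurring in $\mathcal L(V)$, satisfying: $0\preceq A_\xi$ for all $\xi$; $A_\xi\preceq KB_\xi$ for all $\xi$; $\sum_\xi\mathrm{Tr}A_\xi=K$; $\sum_\xi\mathrm{Tr}B_\xi=K^2$; $\mathrm{vec}(B)=M\,\mathrm{vec}(A)$; and $A_\xi=KB_\xi$ for all $\xi\in\mathcal S$. One may take $A_\xi=A_\xi(P)$, $B_\xi=B_\xi(P)$. In particular, infeasibility of this semidefinite system certifies that no $K$-dimensional subspace of $V$ detects all errors in the sectors $\mathcal E_\xi$, $\xi\in\mathcal S$.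
   Context: Let $G$ be a group and $V$ a finite-dimensional complex Hilbert space with a unitary representation $\rho$ of $G$; $G$ acts on $\mathcal L(V)$ by conjugation, unitarily for $\langle X_1,X_2\rangle=\mathrm{Tr}(X_1^\dagger X_2)$. Let $\mathcal L(V)=\bigoplus_\xi\mathcal E_\xi$ be the isotypic decomposition, $m_\xi$ the multiplicity and $d_\xi$ the dimension of type $\xi$. Choose an orthogonal decomposition $\mathcal E_\xi=\bigoplus_{\alpha=1}^{m_\xi}\mathcal E_{\xi\alpha}$ into irreducibles, $G$-equivariant isometric isomorphisms $\phi^\xi_{1\alpha}:\mathcal E_{\xi1}\to\mathcal E_{\xi\alpha}$ ($\phi^\xi_{11}=\mathrm{id}$), an orthonormal basis $\{E_i^1\}_{i=1}^{d_\xi}$ of $\mathcal E_{\xi1}$, and put $E_i^\alpha=\phi^\xi_{1\alpha}(E_i^1)$. Projector matrix units $\Pi_{\xi\alpha\beta}(X)=\sum_i\langle E_i^\alpha,X\rangle E_i^\beta$; twirl matrix units $\mathrm{Twirl}_{\xi\alpha\beta}(X)=\sum_i(E_i^\alpha)^\dagger XE_i^\beta$. Matrix enumerators $[A_\xi(X)]_{\alpha\beta}=\langle X,\Pi_{\xi\alpha\beta}(X)\rangle$, $[B_\xi(X)]_{\alpha\beta}=\langle X,\mathrm{Twirl}_{\xi\alpha\beta}(X)\rangle$. The block MacWilliams matrix is $M_{(\xi,\alpha,\beta),(\rho,\mu,\nu)}=\frac1{d_\xi}\langle\!\langle\Pi_{\xi\alpha\beta},\mathrm{Twirl}_{\rho\mu\nu}\rangle\!\rangle$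 with $\langle\!\langle\mathcal S,\mathcal T\rangle\!\rangle=\mathrm{Tr}(\mathcal S^\dagger\mathcal T)$, and $\mathrm{vec}(B)=M\,\mathrm{vec}(A)$ means $[B_\rho]_{\mu\nu}=\sum_{\xi,\alpha,\beta}M_{(\xi,\alpha,\beta),(\rho,\mu,\nu)}[A_\xi]_{\alpha\beta}$ for all $\rho,\mu,\nu$. $\preceq$ is the Loewner order. A subspace with orthogonal projector $P$ detects every error in $\mathcal F\subseteq\mathcal L(V)$ if for every $E\in\mathcal F$ there is $c_E\in\mathbb C$ with $PEP=c_EP$. *)

theory Defs
  imports "HOL-Algebra.Group" "Jordan_Normal_Form.Matrix"
begin

definition adj :: "complex mat \<Rightarrow> complex mat" where
  "adj A = mat (dim_col A) (dim_row A) (\<lambda>(i,j). cnj (A $$ (j,i)))"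

definition mtrace :: "complex mat \<Rightarrow> complex" where
  "mtrace A = (\<Sum>i<dim_row A. A $$ (i,i))"

definition hs_inner :: "complex mat \<Rightarrow> complex mat \<Rightarrow> complex" where
  "hs_inner X Y = mtrace (adj X * Y)"

definition hermitian :: "complex mat \<Rightarrow> bool" where
  "hermitian A \<longleftrightarrow> dim_row A = dim_col A \<and> adj A = A"

definition loewner_le :: "complex mat \<Rightarrow> complex mat \<Rightarrow> bool" where
  "loewner_le A B \<longleftrightarrow> (\<exists>k. A \<in> carrier_mat k k \<and> B \<in> carrier_mat k k \<and>
     (\<forall>v \<in> carrier_vec k. Im (((B - A) *\<^sub>v v) \<bullet>c v) = 0 \<and> 0 \<le> Re (((B - A) *\<^sub>v v) \<bullet>c v)))"

definition lincomb_m :: "nat \<Rightarrow> 'i set \<Rightarrow> ('i \<Rightarrow> complex) \<Rightarrow> ('i \<Rightarrow> complex mat) \<Rightarrow> complex mat" where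
  "lincomb_m n I c F = mat n n (\<lambda>(a,b). \<Sum>i\<in>I. c i * F i $$ (a,b))"

definition span_m :: "nat \<Rightarrow> 'i set \<Rightarrow> ('i \<Rightarrow> complex mat) \<Rightarrow> complex mat set" where
  "span_m n I F = {lincomb_m n I c F | c. True}"

definition msubspace :: "nat \<Rightarrow> complex mat set \<Rightarrow> bool" where
  "msubspace n W \<longleftrightarrow> W \<subseteq> carrier_mat n n \<and> 0\<^sub>m n n \<in> W \<and>
     (\<forall>X\<in>W. \<forall>Y\<in>W. X + Y \<in> W) \<and> (\<forall>c. \<forall>X\<in>W. c \<cdot>\<^sub>m X \<in> W)"

definition unitary_rep :: "('g, 'b) monoid_scheme \<Rightarrow> nat \<Rightarrow> ('g \<Rightarrow> complex mat) \<Rightarrow> bool" where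
  "unitary_rep G n rep \<longleftrightarrow> group G \<and>
     (\<forall>g\<in>carrier G. rep g \<in> carrier_mat n n \<and> adj (rep g) * rep g = 1\<^sub>m n) \<and>
     (\<forall>g\<in>carrier G. \<forall>h\<in>carrier G. rep (g \<otimes>\<^bsub>G\<^esub> h) = rep g * rep h)"

definition conj_act :: "('g \<Rightarrow> complex mat) \<Rightarrow> 'g \<Rightarrow> complex mat \<Rightarrow> complex mat" where
  "conj_act rep g X = rep g * X * adj (rep g)"

definition invariant_sub :: "('g, 'b) monoid_scheme \<Rightarrow> ('g \<Rightarrow> complex mat) \<Rightarrow> complex mat set \<Rightarrow> bool" where
  "invariant_sub G rep W \<longleftrightarrow> (\<forall>g\<in>carrier G. \<forall>X\<in>W. conj_act rep g X \<in> W)"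

definition irreducible_sub :: "('g, 'b) monoid_scheme \<Rightarrow> nat \<Rightarrow> ('g \<Rightarrow> complex mat) \<Rightarrow> complex mat set \<Rightarrow> bool" where
  "irreducible_sub G n rep W \<longleftrightarrow> msubspace n W \<and> invariant_sub G rep W \<and> W \<noteq> {0\<^sub>m n n} \<and>
     (\<forall>W'. msubspace n W' \<and> W' \<subseteq> W \<and> invariant_sub G rep W' \<longrightarrow> W' = {0\<^sub>m n n} \<or> W' = W)"

definition equiv_iso :: "('g, 'b) monoid_scheme \<Rightarrow> ('g \<Rightarrow> complex mat) \<Rightarrow> complex mat set \<Rightarrow> complex mat set
     \<Rightarrow> (complex mat \<Rightarrow> complex mat) \<Rightarrow> bool" where
  "equiv_iso G rep W W' f \<longleftrightarrow> bij_betw f W W' \<and>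
     (\<forall>X\<in>W. \<forall>Y\<in>W. f (X + Y) = f X + f Y) \<and> (\<forall>c. \<forall>X\<in>W. f (c \<cdot>\<^sub>m X) = c \<cdot>\<^sub>m f X) \<and>
     (\<forall>g\<in>carrier G. \<forall>X\<in>W. f (conj_act rep g X) = conj_act rep g (f X))"

definition isometric_on :: "complex mat set \<Rightarrow> (complex mat \<Rightarrow> complex mat) \<Rightarrow> bool" where
  "isometric_on W f \<longleftrightarrow> (\<forall>X\<in>W. \<forall>Y\<in>W. hs_inner (f X) (f Y) = hs_inner X Y)"

text \<open>Types are indexed by the finite set Xi (the types occurring in L(V)); copies
  alpha range over 0..<m xi (copy 0 plays the role of copy 1 in the paper), basis
  indices i over 0..<d xi.  E xi alpha i is the basis element E_i^alpha of type xi.\<close>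

definition irrep_block :: "nat \<Rightarrow> ('x \<Rightarrow> nat) \<Rightarrow> ('x \<Rightarrow> nat \<Rightarrow> nat \<Rightarrow> complex mat) \<Rightarrow> 'x \<Rightarrow> nat \<Rightarrow> complex mat set" where
  "irrep_block n d E \<xi> \<alpha> = span_m n {..<d \<xi>} (E \<xi> \<alpha>)"

definition isotypic_sector :: "nat \<Rightarrow> ('x \<Rightarrow> nat) \<Rightarrow> ('x \<Rightarrow> nat) \<Rightarrow> ('x \<Rightarrow> nat \<Rightarrow> nat \<Rightarrow> complex mat) \<Rightarrow> 'x \<Rightarrow> complex mat set" where
  "isotypic_sector n m d E \<xi> = span_m n ({..<m \<xi>} \<times> {..<d \<xi>}) (\<lambda>(\<alpha>,i). E \<xi> \<alpha> i)"

definition idx :: "'x set \<Rightarrow> ('x \<Rightarrow> nat) \<Rightarrow> ('x \<Rightarrow> nat) \<Rightarrow> ('x \<times> nat \<times> nat) set" where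
  "idx Xi m d = {(\<xi>,\<alpha>,i). \<xi> \<in> Xi \<and> \<alpha> < m \<xi> \<and> i < d \<xi>}"

definition isotypic_decomposition ::
  "('g, 'b) monoid_scheme \<Rightarrow> nat \<Rightarrow> ('g \<Rightarrow> complex mat) \<Rightarrow> 'x set \<Rightarrow> ('x \<Rightarrow> nat) \<Rightarrow> ('x \<Rightarrow> nat)
     \<Rightarrow> ('x \<Rightarrow> nat \<Rightarrow> nat \<Rightarrow> complex mat) \<Rightarrow> bool" where
  "isotypic_decomposition G n rep Xi m d E \<longleftrightarrow>
     finite Xi \<and> (\<forall>\<xi>\<in>Xi. 1 \<le> m \<xi>) \<and>
     \<comment> \<open>the E_i^alpha of all types form an orthonormal basis of L(V)\<close>
     (\<forall>(\<xi>,\<alpha>,i)\<in>idx Xi m d. E \<xi> \<alpha> i \<in> carrier_mat n n) \<and>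
     (\<forall>p\<in>idx Xi m d. \<forall>q\<in>idx Xi m d.
        hs_inner ((\<lambda>(\<xi>,\<alpha>,i). E \<xi> \<alpha> i) p) ((\<lambda>(\<xi>,\<alpha>,i). E \<xi> \<alpha> i) q) = (if p = q then 1 else 0)) \<and>
     span_m n (idx Xi m d) (\<lambda>(\<xi>,\<alpha>,i). E \<xi> \<alpha> i) = carrier_mat n n \<and>
     \<comment> \<open>each E_{xi alpha} is an irreducible subrepresentation\<close>
     (\<forall>\<xi>\<in>Xi. \<forall>\<alpha><m \<xi>. irreducible_sub G n rep (irrep_block n d E \<xi> \<alpha>)) \<and>
     \<comment> \<open>E_i^alpha = phi_{1 alpha}(E_i^1), phi_{1 alpha} G-equivariant isometric isomorphism\<close>
     (\<forall>\<xi>\<in>Xi. \<forall>\<alpha><m \<xi>. \<exists>\<phi>. equiv_iso G rep (irrep_block n d E \<xi> 0) (irrep_block n d E \<xi> \<alpha>) \<phi> \<and>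
         isometric_on (irrep_block n d E \<xi> 0) \<phi> \<and> (\<forall>i<d \<xi>. \<phi> (E \<xi> 0 i) = E \<xi> \<alpha> i)) \<and>
     \<comment> \<open>distinct types are non-isomorphic (so the sectors are the isotypic components)\<close>
     (\<forall>\<xi>\<in>Xi. \<forall>\<eta>\<in>Xi. \<xi> \<noteq> \<eta> \<longrightarrow>
         \<not> (\<exists>f. equiv_iso G rep (irrep_block n d E \<xi> 0) (irrep_block n d E \<eta> 0) f))"

definition Pi_unit :: "nat \<Rightarrow> ('x \<Rightarrow> nat) \<Rightarrow> ('x \<Rightarrow> nat \<Rightarrow> nat \<Rightarrow> complex mat) \<Rightarrow> 'x \<Rightarrow> nat \<Rightarrow> nat \<Rightarrow> complex mat \<Rightarrow> complex mat" where
  "Pi_unit n d E \<xi> \<alpha> \<beta> X = lincomb_m n {..<d \<xi>} (\<lambda>i. hs_inner (E \<xi> \<alpha> i) X) (E \<xi> \<beta>)"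

definition Twirl_unit :: "nat \<Rightarrow> ('x \<Rightarrow> nat) \<Rightarrow> ('x \<Rightarrow> nat \<Rightarrow> nat \<Rightarrow> complex mat) \<Rightarrow> 'x \<Rightarrow> nat \<Rightarrow> nat \<Rightarrow> complex mat \<Rightarrow> complex mat" where
  "Twirl_unit n d E \<xi> \<alpha> \<beta> X = lincomb_m n {..<d \<xi>} (\<lambda>i. 1) (\<lambda>i. adj (E \<xi> \<alpha> i) * X * E \<xi> \<beta> i)"

definition A_enum :: "nat \<Rightarrow> ('x \<Rightarrow> nat) \<Rightarrow> ('x \<Rightarrow> nat) \<Rightarrow> ('x \<Rightarrow> nat \<Rightarrow> nat \<Rightarrow> complex mat) \<Rightarrow> complex mat \<Rightarrow> 'x \<Rightarrow> complex mat" where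
  "A_enum n m d E X \<xi> = mat (m \<xi>) (m \<xi>) (\<lambda>(\<alpha>,\<beta>). hs_inner X (Pi_unit n d E \<xi> \<alpha> \<beta> X))"

definition B_enum :: "nat \<Rightarrow> ('x \<Rightarrow> nat) \<Rightarrow> ('x \<Rightarrow> nat) \<Rightarrow> ('x \<Rightarrow> nat \<Rightarrow> nat \<Rightarrow> complex mat) \<Rightarrow> complex mat \<Rightarrow> 'x \<Rightarrow> complex mat" where
  "B_enum n m d E X \<xi> = mat (m \<xi>) (m \<xi>) (\<lambda>(\<alpha>,\<beta>). hs_inner X (Twirl_unit n d E \<xi> \<alpha> \<beta> X))"

definition mat_unit :: "nat \<Rightarrow> nat \<Rightarrow> nat \<Rightarrow> complex mat" where
  "mat_unit n a b = mat n n (\<lambda>(i,j). if i = a \<and> j = b then 1 else 0)"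

text \<open><<S,T>> = Tr(S^dagger T) for superoperators on L(V), computed in the orthonormal
  basis of matrix units: Tr(S^dagger T) = sum_k <S B_k, T B_k>.\<close>
definition super_inner :: "nat \<Rightarrow> (complex mat \<Rightarrow> complex mat) \<Rightarrow> (complex mat \<Rightarrow> complex mat) \<Rightarrow> complex" where
  "super_inner n S T = (\<Sum>a<n. \<Sum>b<n. hs_inner (S (mat_unit n a b)) (T (mat_unit n a b)))"

definition MacW :: "nat \<Rightarrow> ('x \<Rightarrow> nat) \<Rightarrow> ('x \<Rightarrow> nat \<Rightarrow> nat \<Rightarrow> complex mat) \<Rightarrow> ('x \<times> nat \<times> nat) \<Rightarrow> ('x \<times> nat \<times> nat) \<Rightarrow> complex" where
  "MacW n d E p q = (case p of (\<xi>,\<alpha>,\<beta>) \<Rightarrow> case q of (\<rho>,\<mu>,\<nu>) \<Rightarrow>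
      (1 / of_nat (d \<xi>)) * super_inner n (Pi_unit n d E \<xi> \<alpha> \<beta>) (Twirl_unit n d E \<rho> \<mu> \<nu>))"

definition mw_feasible :: "nat \<Rightarrow> 'x set \<Rightarrow> ('x \<Rightarrow> nat) \<Rightarrow> ('x \<Rightarrow> nat) \<Rightarrow> ('x \<Rightarrow> nat \<Rightarrow> nat \<Rightarrow> complex mat)
    \<Rightarrow> 'x set \<Rightarrow> nat \<Rightarrow> ('x \<Rightarrow> complex mat) \<Rightarrow> ('x \<Rightarrow> complex mat) \<Rightarrow> bool" where
  "mw_feasible n Xi m d E S K A B \<longleftrightarrow>
     (\<forall>\<xi>\<in>Xi. A \<xi> \<in> carrier_mat (m \<xi>) (m \<xi>) \<and> B \<xi> \<in> carrier_mat (m \<xi>) (m \<xi>) \<and>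
              hermitian (A \<xi>) \<and> hermitian (B \<xi>)) \<and>
     (\<forall>\<xi>\<in>Xi. loewner_le (0\<^sub>m (m \<xi>) (m \<xi>)) (A \<xi>)) \<and>
     (\<forall>\<xi>\<in>Xi. loewner_le (A \<xi>) (of_nat K \<cdot>\<^sub>m B \<xi>)) \<and>
     (\<Sum>\<xi>\<in>Xi. mtrace (A \<xi>)) = of_nat K \<and>
     (\<Sum>\<xi>\<in>Xi. mtrace (B \<xi>)) = of_nat K ^ 2 \<and>
     (\<forall>\<rho>\<in>Xi. \<forall>\<mu><m \<rho>. \<forall>\<nu><m \<rho>.
        B \<rho> $$ (\<mu>,\<nu>) = (\<Sum>\<xi>\<in>Xi. \<Sum>\<alpha><m \<xi>. \<Sum>\<beta><m \<xi>. MacW n d E (\<xi>,\<alpha>,\<beta>) (\<rho>,\<mu>,\<nu>) * A \<xi> $$ (\<alpha>,\<beta>))) \<and>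
     (\<forall>\<xi>\<in>S. A \<xi> = of_nat K \<cdot>\<^sub>m B \<xi>)"

text \<open>A K-dimensional subspace C of V = C^n, given by an orthonormal basis c_0..c_{K-1};
  its orthogonal projector is P = sum_k c_k c_k^dagger.\<close>
definition orthonormal_family :: "nat \<Rightarrow> nat \<Rightarrow> (nat \<Rightarrow> complex vec) \<Rightarrow> bool" where
  "orthonormal_family n K c \<longleftrightarrow> (\<forall>k<K. c k \<in> carrier_vec n) \<and>
     (\<forall>k<K. \<forall>l<K. c k \<bullet>c c l = (if k = l then 1 else 0))"

definition proj_of :: "nat \<Rightarrow> nat \<Rightarrow> (nat \<Rightarrow> complex vec) \<Rightarrow> complex mat" where
  "proj_of n K c = mat n n (\<lambda>(a,b). \<Sum>k<K. c k $ a * cnj (c k $ b))"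

definition detects :: "complex mat \<Rightarrow> complex mat set \<Rightarrow> bool" where
  "detects P F \<longleftrightarrow> (\<forall>X\<in>F. \<exists>c::complex. P * X * P = c \<cdot>\<^sub>m P)"

end

theory Submission imports Defs "Jordan_Normal_Form.Spectral_Radius" begin

definition QQ :: "nat \<Rightarrow> (nat\<times>nat) set" where "QQ n = {..<n} \<times> {..<n}"

lemma finite_QQ[simp]: "finite (QQ n)" by (simp add: QQ_def)

lemma hs_inner_QQ: assumes "X \<in> carrier_mat n n" "Y \<in> carrier_mat n n"
  shows "hs_inner X Y = (\<Sum>q\<in>QQ n. cnj (X $$ q) * Y $$ q)"
proof -
  have "hs_inner X Y = (\<Sum>i<n. \<Sum>k<n. cnj (X $$ (k,i)) * Y $$ (k,i))"
    using assms unfolding hs_inner_def mtrace_def adj_def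
    by (auto simp: scalar_prod_def atLeast0LessThan intro!: sum.cong)
  also have "\<dots> = (\<Sum>k<n. \<Sum>i<n. cnj (X $$ (k,i)) * Y $$ (k,i))" by (rule sum.swap)
  also have "\<dots> = (\<Sum>q\<in>QQ n. cnj (X $$ q) * Y $$ q)"
    unfolding QQ_def by (simp add: sum.cartesian_product)
  finally show ?thesis .
qed

lemma lincomb_carrier[simp]: "lincomb_m n I c F \<in> carrier_mat n n"
  by (simp add: lincomb_m_def)

lemma lincomb_dims[simp]: "dim_row (lincomb_m n I c F) = n" "dim_col (lincomb_m n I c F) = n"
  by (simp_all add: lincomb_m_def)

lemma lincomb_index: "a < n \<Longrightarrow> b < n \<Longrightarrow> lincomb_m n I c F $$ (a,b) = (\<Sum>i\<in>I. c i * F i $$ (a,b))"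
  by (simp add: lincomb_m_def)

lemma lincomb_indexQ: "q \<in> QQ n \<Longrightarrow> lincomb_m n I c F $$ q = (\<Sum>i\<in>I. c i * F i $$ q)"
  by (cases q) (simp add: lincomb_m_def QQ_def)

lemma hs_lincomb_right: assumes "X \<in> carrier_mat n n" "finite I" "\<And>i. i \<in> I \<Longrightarrow> F i \<in> carrier_mat n n"
  shows "hs_inner X (lincomb_m n I c F) = (\<Sum>i\<in>I. c i * hs_inner X (F i))"
proof -
  have "hs_inner X (lincomb_m n I c F) = (\<Sum>q\<in>QQ n. cnj (X $$ q) * (\<Sum>i\<in>I. c i * F i $$ q))"
    using assms by (simp add: hs_inner_QQ lincomb_indexQ)
  also have "\<dots> = (\<Sum>i\<in>I. \<Sum>q\<in>QQ n. c i * (cnj (X $$ q) * F i $$ q))"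
    by (simp add: sum_distrib_left sum.swap[of _ I] mult_ac)
  also have "\<dots> = (\<Sum>i\<in>I. c i * hs_inner X (F i))"
    using assms by (simp add: hs_inner_QQ sum_distrib_left)
  finally show ?thesis .
qed

lemma hs_cnj: assumes "X \<in> carrier_mat n n" "Y \<in> carrier_mat n n"
  shows "hs_inner Y X = cnj (hs_inner X Y)"
  using assms by (simp add: hs_inner_QQ mult.commute)

lemma hs_lincomb_left: assumes "X \<in> carrier_mat n n" "finite I" "\<And>i. i \<in> I \<Longrightarrow> F i \<in> carrier_mat n n"
  shows "hs_inner (lincomb_m n I c F) X = (\<Sum>i\<in>I. cnj (c i) * hs_inner (F i) X)"
proof -
  have "hs_inner (lincomb_m n I c F) X = cnj (hs_inner X (lincomb_m n I c F))"
    using assms by (simp add: hs_cnj[of X n])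
  also have "\<dots> = (\<Sum>i\<in>I. cnj (c i) * hs_inner (F i) X)"
    using assms by (simp add: hs_lincomb_right hs_cnj[of X n])
  finally show ?thesis .
qed

lemma adj_carrier[simp]: "A \<in> carrier_mat n m \<Longrightarrow> adj A \<in> carrier_mat m n"
  by (simp add: adj_def)
lemma adj_dims[simp]: "dim_row (adj A) = dim_col A" "dim_col (adj A) = dim_row A"
  by (simp_all add: adj_def)
lemma adj_index[simp]: "i < dim_col A \<Longrightarrow> j < dim_row A \<Longrightarrow> adj A $$ (i,j) = cnj (A $$ (j,i))"
  by (simp add: adj_def)
lemma adj_adj[simp]: "adj (adj A) = A"
  by (rule eq_matI) auto

lemma mult3_index: assumes "A \<in> carrier_mat n n" "B \<in> carrier_mat n n" "C \<in> carrier_mat n n" "a < n" "b < n"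
  shows "(A * B * C) $$ (a,b) = (\<Sum>k<n. \<Sum>l<n. A $$ (a,k) * B $$ (k,l) * C $$ (l,b))"
  using assms by (auto simp: scalar_prod_def atLeast0LessThan sum_distrib_left sum_distrib_right
      mult_ac intro: sum.swap)

lemma mult2_index: assumes "A \<in> carrier_mat n n" "B \<in> carrier_mat n n" "a < n" "b < n"
  shows "(A * B) $$ (a,b) = (\<Sum>k<n. A $$ (a,k) * B $$ (k,b))"
  using assms by (auto simp: scalar_prod_def atLeast0LessThan)

lemma adj_mult: assumes "A \<in> carrier_mat n k" "B \<in> carrier_mat k m"
  shows "adj (A * B) = adj B * adj A"
  using assms by (intro eq_matI) (auto simp: scalar_prod_def mult.commute)

lemma mtrace_comm: assumes "A \<in> carrier_mat n n" "B \<in> carrier_mat n n"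
  shows "mtrace (A * B) = mtrace (B * A)"
proof -
  have "mtrace (A * B) = (\<Sum>i<n. \<Sum>k<n. A $$ (i,k) * B $$ (k,i))"
    using assms by (auto simp: mtrace_def scalar_prod_def atLeast0LessThan intro!: sum.cong)
  also have "\<dots> = (\<Sum>k<n. \<Sum>i<n. B $$ (k,i) * A $$ (i,k))"
    by (subst sum.swap) (simp add: mult.commute)
  also have "\<dots> = mtrace (B * A)"
    using assms by (auto simp: mtrace_def scalar_prod_def atLeast0LessThan intro!: sum.cong)
  finally show ?thesis .
qed

lemma mult_lincomb_left: assumes "M \<in> carrier_mat n n" "finite I" "\<And>i. i \<in> I \<Longrightarrow> F i \<in> carrier_mat n n"
  shows "M * lincomb_m n I c F = lincomb_m n I c (\<lambda>i. M * F i)"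
proof (rule eq_matI)
  fix a b assume ab: "a < dim_row (lincomb_m n I c (\<lambda>i. M * F i))" "b < dim_col (lincomb_m n I c (\<lambda>i. M * F i))"
  hence ab': "a < n" "b < n" by auto
  have "(M * lincomb_m n I c F) $$ (a,b) = (\<Sum>k<n. M $$ (a,k) * (\<Sum>i\<in>I. c i * F i $$ (k,b)))"
    using assms ab' by (simp add: mult2_index lincomb_index del: index_mult_mat)
  also have "\<dots> = (\<Sum>i\<in>I. c i * (\<Sum>k<n. M $$ (a,k) * F i $$ (k,b)))"
    by (simp add: sum_distrib_left sum.swap[of _ I] mult_ac)
  also have "\<dots> = lincomb_m n I c (\<lambda>i. M * F i) $$ (a,b)"
    using assms ab' by (auto simp: mult2_index lincomb_index intro!: sum.cong)
  finally show "(M * lincomb_m n I c F) $$ (a,b) = lincomb_m n I c (\<lambda>i. M * F i) $$ (a,b)" .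
qed (use assms in auto)

lemma mult_lincomb_right: assumes "M \<in> carrier_mat n n" "finite I" "\<And>i. i \<in> I \<Longrightarrow> F i \<in> carrier_mat n n"
  shows "lincomb_m n I c F * M = lincomb_m n I c (\<lambda>i. F i * M)"
proof (rule eq_matI)
  fix a b assume ab: "a < dim_row (lincomb_m n I c (\<lambda>i. F i * M))" "b < dim_col (lincomb_m n I c (\<lambda>i. F i * M))"
  hence ab': "a < n" "b < n" by auto
  have "(lincomb_m n I c F * M) $$ (a,b) = (\<Sum>k<n. (\<Sum>i\<in>I. c i * F i $$ (a,k)) * M $$ (k,b))"
    using assms ab' by (subst mult2_index[OF lincomb_carrier assms(1) ab']) (auto simp: lincomb_index intro!: sum.cong)
  also have "\<dots> = (\<Sum>i\<in>I. c i * (\<Sum>k<n. F i $$ (a,k) * M $$ (k,b)))"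
    by (simp add: sum_distrib_left sum_distrib_right sum.swap[of _ I] mult_ac)
  also have "\<dots> = lincomb_m n I c (\<lambda>i. F i * M) $$ (a,b)"
    using assms ab' by (simp only: lincomb_index[OF ab']) (intro sum.cong refl, simp add: mult2_index[OF assms(3) assms(1) ab'])
  finally show "(lincomb_m n I c F * M) $$ (a,b) = lincomb_m n I c (\<lambda>i. F i * M) $$ (a,b)" .
qed (use assms in auto)

lemma adj_index_c: "F \<in> carrier_mat n n \<Longrightarrow> i < n \<Longrightarrow> j < n \<Longrightarrow> adj F $$ (i,j) = cnj (F $$ (j,i))"
  by auto

lemma ifmult1[simp]: "(if P then 1 else 0) * (x::complex) = (if P then x else 0)" by simp
lemma ifmult2[simp]: "(x::complex) * (if P then 1 else 0) = (if P then x else 0)" by simp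

lemma adj_lincomb: assumes "\<And>i. i \<in> I \<Longrightarrow> F i \<in> carrier_mat n n"
  shows "adj (lincomb_m n I c F) = lincomb_m n I (\<lambda>i. cnj (c i)) (\<lambda>i. adj (F i))"
proof (rule eq_matI)
  fix i j assume ij: "i < dim_row (lincomb_m n I (\<lambda>i. cnj (c i)) (\<lambda>i. adj (F i)))"
     "j < dim_col (lincomb_m n I (\<lambda>i. cnj (c i)) (\<lambda>i. adj (F i)))"
  hence ij': "i < n" "j < n" by auto
  have "adj (lincomb_m n I c F) $$ (i,j) = cnj (\<Sum>x\<in>I. c x * F x $$ (j,i))"
    using ij' by (simp add: lincomb_index)
  also have "\<dots> = (\<Sum>x\<in>I. cnj (c x) * adj (F x) $$ (i,j))"
    using assms ij' by (simp only: cnj_sum) (intro sum.cong refl, simp add: adj_index_c[OF assms])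
  also have "\<dots> = lincomb_m n I (\<lambda>i. cnj (c i)) (\<lambda>i. adj (F i)) $$ (i,j)"
    using ij' by (simp add: lincomb_index)
  finally show "adj (lincomb_m n I c F) $$ (i,j) = lincomb_m n I (\<lambda>i. cnj (c i)) (\<lambda>i. adj (F i)) $$ (i,j)" .
qed auto

lemma lincomb_lincomb: assumes "finite I" "finite J"
  shows "lincomb_m n I c (\<lambda>i. lincomb_m n J (b i) H) = lincomb_m n J (\<lambda>j. \<Sum>i\<in>I. c i * b i j) H"
  using assms by (intro eq_matI) (auto simp: lincomb_index sum_distrib_left sum_distrib_right
     sum.swap[of _ I] mult_ac)

lemma lincomb_cong: assumes "\<And>i. i \<in> I \<Longrightarrow> c i = c' i" "\<And>i. i \<in> I \<Longrightarrow> F i = F' i"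
  shows "lincomb_m n I c F = lincomb_m n I c' F'"
  using assms by (intro eq_matI) (auto simp: lincomb_index intro!: sum.cong)

lemma lincomb_delta: assumes "finite I" "k \<in> I" "F k \<in> carrier_mat n n"
  shows "lincomb_m n I (\<lambda>j. if j = k then 1 else 0) F = F k"
  using assms by (intro eq_matI) (auto simp: lincomb_index)

lemma lincomb_add: "lincomb_m n I c F + lincomb_m n I c' F = lincomb_m n I (\<lambda>i. c i + c' i) F"
  by (intro eq_matI) (auto simp: lincomb_index sum.distrib distrib_right)

lemma lincomb_smult: "a \<cdot>\<^sub>m lincomb_m n I c F = lincomb_m n I (\<lambda>i. a * c i) F"
  by (intro eq_matI) (auto simp: lincomb_index sum_distrib_left mult_ac)

lemma lincomb_zero: "lincomb_m n I (\<lambda>i. 0) F = 0\<^sub>m n n"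
  by (intro eq_matI) (auto simp: lincomb_index)

definition onf :: "nat \<Rightarrow> 'i set \<Rightarrow> ('i \<Rightarrow> complex mat) \<Rightarrow> bool" where
  "onf n I F \<longleftrightarrow> finite I \<and> (\<forall>i\<in>I. F i \<in> carrier_mat n n) \<and>
     (\<forall>i\<in>I. \<forall>j\<in>I. hs_inner (F i) (F j) = (if i = j then 1 else 0))"

lemma onf_coord: assumes "onf n I F" "k \<in> I"
  shows "hs_inner (F k) (lincomb_m n I c F) = c k"
proof -
  have "hs_inner (F k) (lincomb_m n I c F) = (\<Sum>i\<in>I. c i * (if k = i then 1 else 0))"
    using assms unfolding onf_def by (simp add: hs_lincomb_right)
  also have "\<dots> = c k" using assms unfolding onf_def by (simp add: if_distrib cong: if_cong)
  finally show ?thesis .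
qed

lemma onf_hs: assumes "onf n I F"
  shows "hs_inner (lincomb_m n I c F) (lincomb_m n I c' F) = (\<Sum>i\<in>I. cnj (c i) * c' i)"
  using assms unfolding onf_def by (simp add: hs_lincomb_left onf_coord[OF assms])

lemma onf_expand: assumes "onf n I F" "X = lincomb_m n I c F"
  shows "X = lincomb_m n I (\<lambda>i. hs_inner (F i) X) F"
  using assms by (auto simp: onf_coord intro!: lincomb_cong)

lemma lincomb_swap: assumes "finite I" "finite K"
  shows "lincomb_m n K a (\<lambda>k. lincomb_m n I c (\<lambda>i. H k i)) = lincomb_m n I c (\<lambda>i. lincomb_m n K a (\<lambda>k. H k i))"
  using assms by (intro eq_matI) (auto simp: lincomb_index sum_distrib_left sum.swap[of _ I] mult_ac)

lemma lincomb_collapse: assumes "finite I" "finite K"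
  and delta: "\<And>k l. k \<in> K \<Longrightarrow> l \<in> K \<Longrightarrow> (\<Sum>i\<in>I. a i k * b i l) = (if k = l then 1 else 0)"
  shows "lincomb_m n I (\<lambda>i. 1) (\<lambda>i. lincomb_m n K (a i) (\<lambda>k. lincomb_m n K (b i) (H k)))
       = lincomb_m n K (\<lambda>k. 1) (\<lambda>k. H k k)"
proof (rule eq_matI)
  fix x y assume "x < dim_row (lincomb_m n K (\<lambda>k. 1) (\<lambda>k. H k k))" "y < dim_col (lincomb_m n K (\<lambda>k. 1) (\<lambda>k. H k k))"
  hence xy: "x < n" "y < n" by auto
  have "lincomb_m n I (\<lambda>i. 1) (\<lambda>i. lincomb_m n K (a i) (\<lambda>k. lincomb_m n K (b i) (H k))) $$ (x,y)
     = (\<Sum>i\<in>I. \<Sum>k\<in>K. \<Sum>l\<in>K. a i k * b i l * H k l $$ (x,y))"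
    using xy by (simp add: lincomb_index sum_distrib_left mult_ac)
  also have "\<dots> = (\<Sum>k\<in>K. \<Sum>i\<in>I. \<Sum>l\<in>K. a i k * b i l * H k l $$ (x,y))"
    by (rule sum.swap)
  also have "\<dots> = (\<Sum>k\<in>K. \<Sum>l\<in>K. \<Sum>i\<in>I. a i k * b i l * H k l $$ (x,y))"
    by (intro sum.cong refl) (rule sum.swap)
  also have "\<dots> = (\<Sum>k\<in>K. \<Sum>l\<in>K. (\<Sum>i\<in>I. a i k * b i l) * H k l $$ (x,y))"
    by (simp add: sum_distrib_right)
  also have "\<dots> = (\<Sum>k\<in>K. \<Sum>l\<in>K. (if k = l then H k l $$ (x,y) else 0))"
    by (intro sum.cong refl) (simp add: delta)
  also have "\<dots> = lincomb_m n K (\<lambda>k. 1) (\<lambda>k. H k k) $$ (x,y)"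
    using xy assms by (simp add: lincomb_index)
  finally show "lincomb_m n I (\<lambda>i. 1) (\<lambda>i. lincomb_m n K (a i) (\<lambda>k. lincomb_m n K (b i) (H k))) $$ (x,y)
     = lincomb_m n K (\<lambda>k. 1) (\<lambda>k. H k k) $$ (x,y)" .
qed auto

lemma mat_unit_car[simp]: "mat_unit n a b \<in> carrier_mat n n" by (simp add: mat_unit_def)

lemma hs_unit_left: assumes "a < n" "b < n" "Y \<in> carrier_mat n n"
  shows "hs_inner (mat_unit n a b) Y = Y $$ (a,b)"
proof -
  have "hs_inner (mat_unit n a b) Y = (\<Sum>q\<in>QQ n. cnj (mat_unit n a b $$ q) * Y $$ q)"
    using assms by (simp add: hs_inner_QQ)
  also have "\<dots> = (\<Sum>q\<in>QQ n. if q = (a,b) then Y $$ q else 0)"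
    by (intro sum.cong refl) (auto simp: mat_unit_def QQ_def split: if_splits)
  also have "\<dots> = Y $$ (a,b)" using assms by (simp add: QQ_def)
  finally show ?thesis .
qed

lemma unit_expand: assumes "Y \<in> carrier_mat n n"
  shows "Y = lincomb_m n (QQ n) (\<lambda>q. Y $$ q) (\<lambda>q. mat_unit n (fst q) (snd q))"
proof (rule eq_matI)
  fix i j assume "i < dim_row (lincomb_m n (QQ n) (\<lambda>q. Y $$ q) (\<lambda>q. mat_unit n (fst q) (snd q)))"
    "j < dim_col (lincomb_m n (QQ n) (\<lambda>q. Y $$ q) (\<lambda>q. mat_unit n (fst q) (snd q)))"
  hence ij: "i < n" "j < n" by auto
  have "lincomb_m n (QQ n) (\<lambda>q. Y $$ q) (\<lambda>q. mat_unit n (fst q) (snd q)) $$ (i,j)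
     = (\<Sum>q\<in>QQ n. Y $$ q * mat_unit n (fst q) (snd q) $$ (i,j))"
    using ij by (simp add: lincomb_index)
  also have "\<dots> = (\<Sum>q\<in>QQ n. if q = (i,j) then Y $$ q else 0)"
    using ij by (intro sum.cong refl) (auto simp: mat_unit_def QQ_def)
  also have "\<dots> = Y $$ (i,j)" using ij by (simp add: QQ_def)
  finally show "Y $$ (i,j) = lincomb_m n (QQ n) (\<lambda>q. Y $$ q) (\<lambda>q. mat_unit n (fst q) (snd q)) $$ (i,j)" by simp
qed (use assms in auto)

lemma sum_QQ: "(\<Sum>a<n. \<Sum>b<n. f (a,b)) = (\<Sum>q\<in>QQ n. f q)"
  unfolding QQ_def by (simp add: sum.cartesian_product)

lemma collapse3: fixes m d :: "'x \<Rightarrow> nat" assumes "finite Xi" "\<xi> \<in> Xi" "i < d \<xi>"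
  shows "(\<Sum>\<xi>'\<in>Xi. \<Sum>\<beta><m \<xi>'. \<Sum>i'<d \<xi>'. if \<xi>' = \<xi> \<and> i' = i then F \<xi>' \<beta> i' else (0::complex))
       = (\<Sum>\<beta><m \<xi>. F \<xi> \<beta> i)"
proof -
  have "(\<Sum>\<xi>'\<in>Xi. \<Sum>\<beta><m \<xi>'. \<Sum>i'<d \<xi>'. if \<xi>' = \<xi> \<and> i' = i then F \<xi>' \<beta> i' else (0::complex))
      = (\<Sum>\<xi>'\<in>Xi. if \<xi>' = \<xi> then (\<Sum>\<beta><m \<xi>. F \<xi> \<beta> i) else 0)"
  proof (intro sum.cong refl)
    fix \<xi>' assume "\<xi>' \<in> Xi"
    show "(\<Sum>\<beta><m \<xi>'. \<Sum>i'<d \<xi>'. if \<xi>' = \<xi> \<and> i' = i then F \<xi>' \<beta> i' else 0) =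
          (if \<xi>' = \<xi> then (\<Sum>\<beta><m \<xi>. F \<xi> \<beta> i) else 0)"
    proof (cases "\<xi>' = \<xi>")
      case True
      have "(\<Sum>i'<d \<xi>. if i' = i then F \<xi> \<beta> i' else 0) = F \<xi> \<beta> i" for \<beta>
        using assms(3) by simp
      then show ?thesis using True assms(3) by simp
    qed simp
  qed
  also have "\<dots> = (\<Sum>\<beta><m \<xi>. F \<xi> \<beta> i)" using assms by simp
  finally show ?thesis .
qed

lemma sum_idx: assumes "finite Xi"
  shows "(\<Sum>p\<in>idx Xi m d. f p) = (\<Sum>\<xi>\<in>Xi. \<Sum>\<alpha><m \<xi>. \<Sum>i<d \<xi>. f (\<xi>,\<alpha>,i))"
proof -
  have "idx Xi m d = Sigma Xi (\<lambda>\<xi>. Sigma {..<m \<xi>} (\<lambda>\<alpha>. {..<d \<xi>}))" by (auto simp: idx_def)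
  thus ?thesis using assms by (simp add: sum.Sigma sum.cartesian_product)
qed

lemma finite_idx: "finite Xi \<Longrightarrow> finite (idx Xi m d)"
proof -
  assume "finite Xi"
  moreover have "idx Xi m d = Sigma Xi (\<lambda>\<xi>. Sigma {..<m \<xi>} (\<lambda>\<alpha>. {..<d \<xi>}))" by (auto simp: idx_def)
  ultimately show ?thesis by simp
qed

lemma P_index: "a < n \<Longrightarrow> b < n \<Longrightarrow> proj_of n K c $$ (a,b) = (\<Sum>k<K. c k $ a * cnj (c k $ b))"
  by (simp add: proj_of_def)

lemma P_car[simp]: "proj_of n K c \<in> carrier_mat n n" by (simp add: proj_of_def)

lemma onfam_inner: assumes "orthonormal_family n K c" "k < K" "l < K"
  shows "(\<Sum>j<n. c k $ j * cnj (c l $ j)) = (if k = l then 1 else 0)"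
proof -
  have "c k \<bullet>c c l = (if k = l then 1 else 0)" using assms unfolding orthonormal_family_def by blast
  moreover have "c l \<in> carrier_vec n" using assms unfolding orthonormal_family_def by blast
  hence "c k \<bullet>c c l = (\<Sum>j<n. c k $ j * cnj (c l $ j))"
    by (simp add: scalar_prod_def atLeast0LessThan)
  ultimately show ?thesis by simp
qed

lemma P_adj: "adj (proj_of n K c) = proj_of n K c"
  by (intro eq_matI) (auto simp: proj_of_def mult.commute)

lemma P_idem: assumes "orthonormal_family n K c"
  shows "proj_of n K c * proj_of n K c = proj_of n K c"
proof (rule eq_matI)
  fix a b assume "a < dim_row (proj_of n K c)" "b < dim_col (proj_of n K c)"
  hence ab: "a < n" "b < n" by (auto simp: proj_of_def)
  have "(proj_of n K c * proj_of n K c) $$ (a,b) = (\<Sum>j<n. (\<Sum>k<K. c k $ a * cnj (c k $ j)) * (\<Sum>l<K. c l $ j * cnj (c l $ b)))"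
    using ab by (subst mult2_index[OF P_car P_car ab]) (auto simp: P_index intro!: sum.cong)
  also have "\<dots> = (\<Sum>j<n. \<Sum>k<K. \<Sum>l<K. c k $ a * cnj (c l $ b) * (c l $ j * cnj (c k $ j)))"
    by (simp add: sum_distrib_left sum_distrib_right mult_ac)
  also have "\<dots> = (\<Sum>k<K. \<Sum>j<n. \<Sum>l<K. c k $ a * cnj (c l $ b) * (c l $ j * cnj (c k $ j)))"
    by (rule sum.swap)
  also have "\<dots> = (\<Sum>k<K. \<Sum>l<K. \<Sum>j<n. c k $ a * cnj (c l $ b) * (c l $ j * cnj (c k $ j)))"
    by (rule sum.cong[OF refl]) (rule sum.swap)
  also have "\<dots> = (\<Sum>k<K. \<Sum>l<K. c k $ a * cnj (c l $ b) * (if l = k then 1 else 0))"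
    using assms by (intro sum.cong refl) (simp add: sum_distrib_left[symmetric] onfam_inner)
  also have "\<dots> = proj_of n K c $$ (a,b)" using ab by (simp add: P_index)
  finally show "(proj_of n K c * proj_of n K c) $$ (a,b) = proj_of n K c $$ (a,b)" .
qed (auto simp: proj_of_def)

lemma P_trace: assumes "orthonormal_family n K c"
  shows "mtrace (proj_of n K c) = of_nat K"
proof -
  have "mtrace (proj_of n K c) = (\<Sum>a<n. \<Sum>k<K. c k $ a * cnj (c k $ a))"
    by (simp add: mtrace_def proj_of_def)
  also have "\<dots> = (\<Sum>k<K. \<Sum>a<n. c k $ a * cnj (c k $ a))" by (rule sum.swap)
  also have "\<dots> = (\<Sum>k<K. 1)" using assms by (intro sum.cong refl) (simp add: onfam_inner)
  finally show ?thesis by simp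
qed

lemma cs_real: fixes a b :: "'i \<Rightarrow> real" assumes "finite S"
  shows "(\<Sum>q\<in>S. a q * b q)^2 \<le> (\<Sum>q\<in>S. (a q)^2) * (\<Sum>q\<in>S. (b q)^2)"
proof -
  define A where "A = (\<Sum>q\<in>S. (a q)^2)"
  define B where "B = (\<Sum>q\<in>S. (b q)^2)"
  define C where "C = (\<Sum>q\<in>S. a q * b q)"
  have "0 \<le> (\<Sum>q\<in>S. \<Sum>r\<in>S. (a q * b r - a r * b q)^2)" by (intro sum_nonneg) auto
  also have "\<dots> = (\<Sum>q\<in>S. \<Sum>r\<in>S. ((a q)^2 * (b r)^2 + (b q)^2 * (a r)^2) - 2 * ((a q * b q) * (a r * b r)))"
    by (intro sum.cong refl) (simp add: power2_eq_square algebra_simps)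
  also have "\<dots> = (\<Sum>q\<in>S. \<Sum>r\<in>S. (a q)^2 * (b r)^2) + (\<Sum>q\<in>S. \<Sum>r\<in>S. (b q)^2 * (a r)^2)
        - 2 * (\<Sum>q\<in>S. \<Sum>r\<in>S. (a q * b q) * (a r * b r))"
    by (simp only: sum_subtractf sum.distrib sum_distrib_left)
  also have "\<dots> = A * B + B * A - 2 * (C * C)"
    unfolding A_def B_def C_def by (simp only: sum_product)
  finally have "0 \<le> 2 * (A * B) - 2 * C^2" by (simp add: power2_eq_square algebra_simps)
  thus ?thesis unfolding A_def B_def C_def by simp
qed

lemma cs_complex: assumes "finite S"
  shows "(cmod (\<Sum>q\<in>S. cnj (x q) * y q))^2 \<le> (\<Sum>q\<in>S. (cmod (x q))^2) * (\<Sum>q\<in>S. (cmod (y q))^2)"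
proof -
  have "cmod (\<Sum>q\<in>S. cnj (x q) * y q) \<le> (\<Sum>q\<in>S. cmod (x q) * cmod (y q))"
    by (rule order.trans[OF norm_sum]) (simp add: norm_mult)
  hence "(cmod (\<Sum>q\<in>S. cnj (x q) * y q))^2 \<le> (\<Sum>q\<in>S. cmod (x q) * cmod (y q))^2"
    by (simp add: power_mono)
  also have "\<dots> \<le> (\<Sum>q\<in>S. (cmod (x q))^2) * (\<Sum>q\<in>S. (cmod (y q))^2)" by (rule cs_real[OF assms])
  finally show ?thesis .
qed

lemma hs_self: assumes "X \<in> carrier_mat n n"
  shows "hs_inner X X = of_real (\<Sum>q\<in>QQ n. (cmod (X $$ q))^2)"
proof -
  have "hs_inner X X = (\<Sum>q\<in>QQ n. of_real ((cmod (X $$ q))^2))"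
    using assms by (simp add: hs_inner_QQ complex_norm_square mult.commute del: of_real_power)
  also have "\<dots> = of_real (\<Sum>q\<in>QQ n. (cmod (X $$ q))^2)" by (simp only: of_real_sum)
  finally show ?thesis .
qed

lemma hs_cs: assumes "X \<in> carrier_mat n n" "Y \<in> carrier_mat n n"
  shows "(cmod (hs_inner X Y))^2 \<le> Re (hs_inner X X) * Re (hs_inner Y Y)"
  using cs_complex[of "QQ n" "\<lambda>q. X $$ q" "\<lambda>q. Y $$ q"] assms by (simp add: hs_self hs_inner_QQ)

lemma mult_nn[simp]: "(A::complex mat) \<in> carrier_mat n n \<Longrightarrow> B \<in> carrier_mat n n \<Longrightarrow> A * B \<in> carrier_mat n n"
  by simp

lemma qform: assumes "(M::complex mat) \<in> carrier_mat k k" "v \<in> carrier_vec k"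
  shows "(M *\<^sub>v v) \<bullet>c v = (\<Sum>\<alpha><k. \<Sum>\<beta><k. M $$ (\<alpha>,\<beta>) * v $ \<beta> * cnj (v $ \<alpha>))"
  using assms by (auto simp: scalar_prod_def atLeast0LessThan sum_distrib_right intro!: sum.cong)

lemma sandwich_lincomb: assumes "finite I" "finite J" "\<And>i. i \<in> I \<Longrightarrow> F i \<in> carrier_mat n n"
  "\<And>j. j \<in> J \<Longrightarrow> H j \<in> carrier_mat n n" "M \<in> carrier_mat n n"
  shows "adj (lincomb_m n I a F) * M * lincomb_m n J b H
    = lincomb_m n I (\<lambda>i. cnj (a i)) (\<lambda>i. lincomb_m n J b (\<lambda>j. adj (F i) * M * H j))"
proof -
  have "adj (lincomb_m n I a F) * M = lincomb_m n I (\<lambda>i. cnj (a i)) (\<lambda>i. adj (F i)) * M"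
    using adj_lincomb[where I=I and F=F and c=a and n=n] assms by simp
  also have "\<dots> = lincomb_m n I (\<lambda>i. cnj (a i)) (\<lambda>i. adj (F i) * M)"
    by (rule mult_lincomb_right) (use assms in auto)
  finally have "adj (lincomb_m n I a F) * M * lincomb_m n J b H
     = lincomb_m n I (\<lambda>i. cnj (a i)) (\<lambda>i. adj (F i) * M) * lincomb_m n J b H" by simp
  also have "\<dots> = lincomb_m n I (\<lambda>i. cnj (a i)) (\<lambda>i. adj (F i) * M * lincomb_m n J b H)"
    by (rule mult_lincomb_right) (use assms in auto)
  also have "\<dots> = lincomb_m n I (\<lambda>i. cnj (a i)) (\<lambda>i. lincomb_m n J b (\<lambda>j. adj (F i) * M * H j))"
    by (intro lincomb_cong refl mult_lincomb_left) (use assms in auto)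
  finally show ?thesis .
qed

lemma one_smult_m[simp]: "1 \<cdot>\<^sub>m (A::complex mat) = A" by (intro eq_matI) auto

lemma hs_smult: assumes "X \<in> carrier_mat n n" "Y \<in> carrier_mat n n"
  shows "hs_inner (a \<cdot>\<^sub>m X) (b \<cdot>\<^sub>m Y) = cnj a * b * hs_inner X Y"
proof -
  have "hs_inner (a \<cdot>\<^sub>m X) (b \<cdot>\<^sub>m Y) = (\<Sum>q\<in>QQ n. cnj ((a \<cdot>\<^sub>m X) $$ q) * (b \<cdot>\<^sub>m Y) $$ q)"
    by (rule hs_inner_QQ) (use assms in auto)
  also have "\<dots> = (\<Sum>q\<in>QQ n. cnj a * b * (cnj (X $$ q) * Y $$ q))"
    using assms by (intro sum.cong refl) (auto simp: QQ_def)
  also have "\<dots> = cnj a * b * hs_inner X Y" using assms by (simp add: hs_inner_QQ sum_distrib_left)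
  finally show ?thesis .
qed

locale mwsetup =
  fixes G :: "('g, 'b) monoid_scheme" and rep :: "'g \<Rightarrow> complex mat" and n :: nat
    and Xi :: "'x set" and m d :: "'x \<Rightarrow> nat" and E :: "'x \<Rightarrow> nat \<Rightarrow> nat \<Rightarrow> complex mat"
  assumes UR: "unitary_rep G n rep" and ID: "isotypic_decomposition G n rep Xi m d E"
begin

lemma grp: "group G" using UR unfolding unitary_rep_def by auto

lemma rep_car[simp]: "g \<in> carrier G \<Longrightarrow> rep g \<in> carrier_mat n n"
  using UR unfolding unitary_rep_def by auto

lemma rep_unit1: "g \<in> carrier G \<Longrightarrow> adj (rep g) * rep g = 1\<^sub>m n"
  using UR unfolding unitary_rep_def by auto

lemma rep_unit2: "g \<in> carrier G \<Longrightarrow> rep g * adj (rep g) = 1\<^sub>m n"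
  using rep_unit1 mat_mult_left_right_inverse[of "adj (rep g)" n "rep g"] by auto

lemma rep_mult: "g \<in> carrier G \<Longrightarrow> h \<in> carrier G \<Longrightarrow> rep (g \<otimes>\<^bsub>G\<^esub> h) = rep g * rep h"
  using UR unfolding unitary_rep_def by auto

lemma mc[simp]: "(A::complex mat) \<in> carrier_mat n n \<Longrightarrow> B \<in> carrier_mat n n \<Longrightarrow> A * B \<in> carrier_mat n n"
  by simp
lemma massoc[simp]: "(A::complex mat) \<in> carrier_mat n n \<Longrightarrow> B \<in> carrier_mat n n \<Longrightarrow> C \<in> carrier_mat n n \<Longrightarrow> A * B * C = A * (B * C)"
  by (rule assoc_mult_mat)
lemma mone1[simp]: "(A::complex mat) \<in> carrier_mat n n \<Longrightarrow> A * 1\<^sub>m n = A" by (metis right_mult_one_mat)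
lemma mone2[simp]: "(A::complex mat) \<in> carrier_mat n n \<Longrightarrow> 1\<^sub>m n * A = A" by (metis left_mult_one_mat)
lemma adjrep_car[simp]: "g \<in> carrier G \<Longrightarrow> adj (rep g) \<in> carrier_mat n n" by simp
lemma rep_cancel1[simp]: "g \<in> carrier G \<Longrightarrow> X \<in> carrier_mat n n \<Longrightarrow> adj (rep g) * (rep g * X) = X"
  by (simp add: assoc_mult_mat[symmetric, of _ n n _ n _ n] rep_unit1)
lemma rep_cancel2[simp]: "g \<in> carrier G \<Longrightarrow> X \<in> carrier_mat n n \<Longrightarrow> rep g * (adj (rep g) * X) = X"
  by (simp add: assoc_mult_mat[symmetric, of _ n n _ n _ n] rep_unit2)

lemma rep_one: "rep \<one>\<^bsub>G\<^esub> = 1\<^sub>m n"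
proof -
  have o: "\<one>\<^bsub>G\<^esub> \<in> carrier G" using grp by (simp add: group.is_monoid monoid.one_closed)
  have e: "rep \<one>\<^bsub>G\<^esub> * rep \<one>\<^bsub>G\<^esub> = rep \<one>\<^bsub>G\<^esub>"
    using rep_mult[OF o o] grp o by (simp add: group.is_monoid monoid.l_one)
  have "rep \<one>\<^bsub>G\<^esub> = adj (rep \<one>\<^bsub>G\<^esub>) * (rep \<one>\<^bsub>G\<^esub> * rep \<one>\<^bsub>G\<^esub>)"
    using o by simp
  also have "\<dots> = 1\<^sub>m n" using e o rep_unit1[OF o] by simp
  finally show ?thesis .
qed

lemma inv_car[simp]: "g \<in> carrier G \<Longrightarrow> inv\<^bsub>G\<^esub> g \<in> carrier G"
  using grp by (simp add: group.inv_closed)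

lemma rep_inv: assumes g: "g \<in> carrier G" shows "rep (inv\<^bsub>G\<^esub> g) = adj (rep g)"
proof -
  have ri: "rep g * rep (inv\<^bsub>G\<^esub> g) = 1\<^sub>m n"
    using rep_mult[OF g inv_car[OF g]] g grp by (simp add: group.r_inv rep_one)
  have "rep (inv\<^bsub>G\<^esub> g) = adj (rep g) * (rep g * rep (inv\<^bsub>G\<^esub> g))" using g by simp
  also have "\<dots> = adj (rep g)" using ri g by simp
  finally show ?thesis .
qed

abbreviation C where "C g X \<equiv> conj_act rep g X"

lemma C_car[simp]: "g \<in> carrier G \<Longrightarrow> X \<in> carrier_mat n n \<Longrightarrow> C g X \<in> carrier_mat n n"
  by (simp add: conj_act_def)

lemma C_lincomb: assumes "g \<in> carrier G" "finite I" "\<And>i. i \<in> I \<Longrightarrow> F i \<in> carrier_mat n n"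
  shows "C g (lincomb_m n I c F) = lincomb_m n I c (\<lambda>i. C g (F i))"
  using assms unfolding conj_act_def
  by (simp add: mult_lincomb_left mult_lincomb_right)

lemma C_inv_C: assumes g: "g \<in> carrier G" and X: "X \<in> carrier_mat n n"
  shows "C (inv\<^bsub>G\<^esub> g) (C g X) = X"
  unfolding conj_act_def rep_inv[OF g] using g X by (simp add: rep_unit1)

lemma C_adjoint: assumes g: "g \<in> carrier G" and X: "X \<in> carrier_mat n n" and Y: "Y \<in> carrier_mat n n"
  shows "hs_inner X (C g Y) = hs_inner (C (inv\<^bsub>G\<^esub> g) X) Y"
proof -
  have "hs_inner X (C g Y) = mtrace ((adj X * (rep g * Y)) * adj (rep g))"
    unfolding hs_inner_def conj_act_def using g X Y by simp
  also have "\<dots> = mtrace (adj (rep g) * (adj X * (rep g * Y)))"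
    using g X Y by (intro mtrace_comm) auto
  also have "\<dots> = hs_inner (C (inv\<^bsub>G\<^esub> g) X) Y"
    unfolding hs_inner_def conj_act_def rep_inv[OF g] using g X Y
    by (simp add: adj_mult[of _ n n _ n])
  finally show ?thesis .
qed

lemma C_iso: assumes g: "g \<in> carrier G" and X: "X \<in> carrier_mat n n" and Y: "Y \<in> carrier_mat n n"
  shows "hs_inner (C g X) (C g Y) = hs_inner X Y"
  using C_adjoint[OF g _ Y, of "C g X"] C_inv_C[OF g X] g X by simp


lemma IDc: "finite Xi" "\<forall>\<xi>\<in>Xi. 1 \<le> m \<xi>"
    "\<forall>(\<xi>,\<alpha>,i)\<in>idx Xi m d. E \<xi> \<alpha> i \<in> carrier_mat n n"
    "\<forall>p\<in>idx Xi m d. \<forall>q\<in>idx Xi m d.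
        hs_inner ((\<lambda>(\<xi>,\<alpha>,i). E \<xi> \<alpha> i) p) ((\<lambda>(\<xi>,\<alpha>,i). E \<xi> \<alpha> i) q) = (if p = q then 1 else 0)"
    "span_m n (idx Xi m d) (\<lambda>(\<xi>,\<alpha>,i). E \<xi> \<alpha> i) = carrier_mat n n"
    "\<forall>\<xi>\<in>Xi. \<forall>\<alpha><m \<xi>. irreducible_sub G n rep (irrep_block n d E \<xi> \<alpha>)"
    "\<forall>\<xi>\<in>Xi. \<forall>\<alpha><m \<xi>. \<exists>\<phi>. equiv_iso G rep (irrep_block n d E \<xi> 0) (irrep_block n d E \<xi> \<alpha>) \<phi> \<and>
         isometric_on (irrep_block n d E \<xi> 0) \<phi> \<and> (\<forall>i<d \<xi>. \<phi> (E \<xi> 0 i) = E \<xi> \<alpha> i)"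
    "\<forall>\<xi>\<in>Xi. \<forall>\<eta>\<in>Xi. \<xi> \<noteq> \<eta> \<longrightarrow>
         \<not> (\<exists>f. equiv_iso G rep (irrep_block n d E \<xi> 0) (irrep_block n d E \<eta> 0) f)"
  using ID unfolding isotypic_decomposition_def by auto

lemma m_pos: "\<xi> \<in> Xi \<Longrightarrow> 0 < m \<xi>"
  using IDc(2) by fastforce

lemma finXi: "finite Xi"
  using IDc(1) by auto

lemma Ecar[simp]: "\<xi> \<in> Xi \<Longrightarrow> \<alpha> < m \<xi> \<Longrightarrow> i < d \<xi> \<Longrightarrow> E \<xi> \<alpha> i \<in> carrier_mat n n"
proof -
  assume "\<xi> \<in> Xi" "\<alpha> < m \<xi>" "i < d \<xi>"
  hence "(\<xi>,\<alpha>,i) \<in> idx Xi m d" by (simp add: idx_def)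
  thus ?thesis using IDc(3) by auto
qed

lemma Eon: assumes "\<xi> \<in> Xi" "\<alpha> < m \<xi>" "i < d \<xi>" "\<xi>' \<in> Xi" "\<alpha>' < m \<xi>'" "i' < d \<xi>'"
  shows "hs_inner (E \<xi> \<alpha> i) (E \<xi>' \<alpha>' i') = (if \<xi> = \<xi>' \<and> \<alpha> = \<alpha>' \<and> i = i' then 1 else 0)"
proof -
  have "(\<xi>,\<alpha>,i) \<in> idx Xi m d" "(\<xi>',\<alpha>',i') \<in> idx Xi m d" using assms by (auto simp: idx_def)
  from IDc(4)[rule_format, OF this] show ?thesis by simp
qed

lemma onf_blk: "\<xi> \<in> Xi \<Longrightarrow> \<alpha> < m \<xi> \<Longrightarrow> onf n {..<d \<xi>} (E \<xi> \<alpha>)"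
  unfolding onf_def by (auto simp: Eon)

abbreviation blk where "blk \<xi> \<alpha> \<equiv> irrep_block n d E \<xi> \<alpha>"

lemma irr: "\<xi> \<in> Xi \<Longrightarrow> \<alpha> < m \<xi> \<Longrightarrow> irreducible_sub G n rep (blk \<xi> \<alpha>)"
  using IDc(6) by blast

lemma blk_inv: "\<xi> \<in> Xi \<Longrightarrow> \<alpha> < m \<xi> \<Longrightarrow> g \<in> carrier G \<Longrightarrow> X \<in> blk \<xi> \<alpha> \<Longrightarrow> C g X \<in> blk \<xi> \<alpha>"
  using irr unfolding irreducible_sub_def invariant_sub_def by blast

lemma blk_car: "X \<in> blk \<xi> \<alpha> \<Longrightarrow> X \<in> carrier_mat n n"
  unfolding irrep_block_def span_m_def by auto

lemma blk_expand: assumes "\<xi> \<in> Xi" "\<alpha> < m \<xi>" "X \<in> blk \<xi> \<alpha>"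
  shows "X = lincomb_m n {..<d \<xi>} (\<lambda>i. hs_inner (E \<xi> \<alpha> i) X) (E \<xi> \<alpha>)"
  using assms(3) onf_expand[OF onf_blk[OF assms(1,2)]] unfolding irrep_block_def span_m_def by auto

lemma E_in_blk: assumes "\<xi> \<in> Xi" "\<alpha> < m \<xi>" "i < d \<xi>" shows "E \<xi> \<alpha> i \<in> blk \<xi> \<alpha>"
proof -
  have "E \<xi> \<alpha> i = lincomb_m n {..<d \<xi>} (\<lambda>j. if j = i then 1 else 0) (E \<xi> \<alpha>)"
    using assms by (simp add: lincomb_delta)
  thus ?thesis unfolding irrep_block_def span_m_def by blast
qed

definition R where "R \<xi> \<alpha> g i j = hs_inner (E \<xi> \<alpha> i) (C g (E \<xi> \<alpha> j))"

lemma CE_expand: assumes "\<xi> \<in> Xi" "\<alpha> < m \<xi>" "j < d \<xi>" "g \<in> carrier G"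
  shows "C g (E \<xi> \<alpha> j) = lincomb_m n {..<d \<xi>} (\<lambda>i. R \<xi> \<alpha> g i j) (E \<xi> \<alpha>)"
  unfolding R_def using blk_expand[OF assms(1,2) blk_inv[OF assms(1,2,4) E_in_blk[OF assms(1,2,3)]]] .

lemma R_copy: assumes "\<xi> \<in> Xi" "\<alpha> < m \<xi>" "i < d \<xi>" "j < d \<xi>" "g \<in> carrier G"
  shows "R \<xi> \<alpha> g i j = R \<xi> 0 g i j"
proof -
  have m0: "0 < m \<xi>" using m_pos assms by auto
  obtain \<phi> where \<phi>: "equiv_iso G rep (blk \<xi> 0) (blk \<xi> \<alpha>) \<phi>" "isometric_on (blk \<xi> 0) \<phi>"
     "\<forall>i<d \<xi>. \<phi> (E \<xi> 0 i) = E \<xi> \<alpha> i"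
    using IDc(7) assms by meson
  have Ei: "E \<xi> 0 i \<in> blk \<xi> 0" and Ej: "E \<xi> 0 j \<in> blk \<xi> 0" using E_in_blk m0 assms by auto
  have CEj: "C g (E \<xi> 0 j) \<in> blk \<xi> 0" using blk_inv[OF assms(1) m0 assms(5) Ej] .
  have "R \<xi> \<alpha> g i j = hs_inner (\<phi> (E \<xi> 0 i)) (C g (\<phi> (E \<xi> 0 j)))"
    unfolding R_def using \<phi>(3) assms by simp
  also have "\<dots> = hs_inner (\<phi> (E \<xi> 0 i)) (\<phi> (C g (E \<xi> 0 j)))"
    using \<phi>(1) Ej assms(5) unfolding equiv_iso_def by simp
  also have "\<dots> = R \<xi> 0 g i j"
    using \<phi>(2) Ei CEj unfolding isometric_on_def R_def by simp
  finally show ?thesis .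
qed

lemma R_unitary: assumes "\<xi> \<in> Xi" "\<alpha> < m \<xi>" "i < d \<xi>" "j < d \<xi>" "g \<in> carrier G"
  shows "(\<Sum>k<d \<xi>. cnj (R \<xi> \<alpha> g k i) * R \<xi> \<alpha> g k j) = (if i = j then 1 else 0)"
proof -
  have "(\<Sum>k<d \<xi>. cnj (R \<xi> \<alpha> g k i) * R \<xi> \<alpha> g k j) = hs_inner (C g (E \<xi> \<alpha> i)) (C g (E \<xi> \<alpha> j))"
    using CE_expand assms onf_hs[OF onf_blk[OF assms(1,2)]] by simp
  also have "\<dots> = hs_inner (E \<xi> \<alpha> i) (E \<xi> \<alpha> j)" using assms by (simp add: C_iso)
  also have "\<dots> = (if i = j then 1 else 0)" using assms by (simp add: Eon)
  finally show ?thesis .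
qed

lemma R_inv: assumes "\<xi> \<in> Xi" "\<alpha> < m \<xi>" "i < d \<xi>" "k < d \<xi>" "g \<in> carrier G"
  shows "R \<xi> \<alpha> (inv\<^bsub>G\<^esub> g) k i = cnj (R \<xi> \<alpha> g i k)"
proof -
  have "R \<xi> \<alpha> (inv\<^bsub>G\<^esub> g) k i = hs_inner (C g (E \<xi> \<alpha> k)) (E \<xi> \<alpha> i)"
    unfolding R_def using C_adjoint[of "inv\<^bsub>G\<^esub> g" "E \<xi> \<alpha> k" "E \<xi> \<alpha> i"] assms grp
    by (simp add: group.inv_inv)
  also have "\<dots> = cnj (R \<xi> \<alpha> g i k)" unfolding R_def using assms by (subst hs_cnj[of _ n]) auto
  finally show ?thesis .
qed

abbreviation T where "T \<rho> \<mu> \<nu> X \<equiv> Twirl_unit n d E \<rho> \<mu> \<nu> X"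

lemma T_car[simp]: "T \<rho> \<mu> \<nu> X \<in> carrier_mat n n"
  by (simp add: Twirl_unit_def)

lemma T_lincomb: assumes "\<rho> \<in> Xi" "\<mu> < m \<rho>" "\<nu> < m \<rho>" "finite I" "\<And>i. i \<in> I \<Longrightarrow> F i \<in> carrier_mat n n"
  shows "T \<rho> \<mu> \<nu> (lincomb_m n I c F) = lincomb_m n I c (\<lambda>i. T \<rho> \<mu> \<nu> (F i))"
proof -
  have "T \<rho> \<mu> \<nu> (lincomb_m n I c F) = lincomb_m n {..<d \<rho>} (\<lambda>k. 1)
      (\<lambda>k. lincomb_m n I c (\<lambda>i. adj (E \<rho> \<mu> k) * F i * E \<rho> \<nu> k))"
    unfolding Twirl_unit_def using assms
    by (intro lincomb_cong refl) (simp add: mult_lincomb_left mult_lincomb_right)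
  also have "\<dots> = lincomb_m n I c (\<lambda>i. T \<rho> \<mu> \<nu> (F i))"
    unfolding Twirl_unit_def using assms by (intro lincomb_swap) auto
  finally show ?thesis .
qed

lemma T_equiv: assumes r: "\<rho> \<in> Xi" "\<mu> < m \<rho>" "\<nu> < m \<rho>" and g: "g \<in> carrier G" and X: "X \<in> carrier_mat n n"
  shows "T \<rho> \<mu> \<nu> (C g X) = C g (T \<rho> \<mu> \<nu> X)"
proof -
  define h where "h = inv\<^bsub>G\<^esub> g"
  have h: "h \<in> carrier G" using g by (simp add: h_def)
  define Q where "Q k i = R \<rho> 0 h k i" for k i
  let ?K = "{..<d \<rho>}"
  have m0: "0 < m \<rho>" using m_pos r by auto
  have Cm: "C h (E \<rho> \<mu> i) = lincomb_m n ?K (\<lambda>k. Q k i) (E \<rho> \<mu>)" if "i < d \<rho>" for i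
    using CE_expand[OF r(1,2) that h] R_copy[OF r(1,2) _ that h] unfolding Q_def
    by (auto intro!: lincomb_cong)
  have Cn: "C h (E \<rho> \<nu> i) = lincomb_m n ?K (\<lambda>k. Q k i) (E \<rho> \<nu>)" if "i < d \<rho>" for i
    using CE_expand[OF r(1,3) that h] R_copy[OF r(1,3) _ that h] unfolding Q_def
    by (auto intro!: lincomb_cong)
  have step1: "adj (E \<rho> \<mu> i) * C g X * E \<rho> \<nu> i = C g (adj (C h (E \<rho> \<mu> i)) * X * C h (E \<rho> \<nu> i))"
    if "i < d \<rho>" for i
    unfolding conj_act_def h_def rep_inv[OF g] using g X r that
    by (simp add: adj_mult[of _ n n _ n] rep_unit1 rep_unit2)
  have step2: "C g (adj (C h (E \<rho> \<mu> i)) * X * C h (E \<rho> \<nu> i)) =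
     lincomb_m n ?K (\<lambda>k. cnj (Q k i)) (\<lambda>k. lincomb_m n ?K (\<lambda>l. Q l i) (\<lambda>l. C g (adj (E \<rho> \<mu> k) * X * E \<rho> \<nu> l)))"
    if "i < d \<rho>" for i
  proof -
    have "adj (C h (E \<rho> \<mu> i)) * X * C h (E \<rho> \<nu> i) =
       lincomb_m n ?K (\<lambda>k. cnj (Q k i)) (\<lambda>k. lincomb_m n ?K (\<lambda>l. Q l i) (\<lambda>l. adj (E \<rho> \<mu> k) * X * E \<rho> \<nu> l))"
      unfolding Cm[OF that] Cn[OF that]
    proof -
      have Em: "\<And>k. k \<in> ?K \<Longrightarrow> E \<rho> \<mu> k \<in> carrier_mat n n" and En: "\<And>k. k \<in> ?K \<Longrightarrow> E \<rho> \<nu> k \<in> carrier_mat n n"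
        using r by auto
      have "adj (lincomb_m n ?K (\<lambda>k. Q k i) (E \<rho> \<mu>)) * X = lincomb_m n ?K (\<lambda>k. cnj (Q k i)) (\<lambda>k. adj (E \<rho> \<mu> k)) * X"
        using adj_lincomb[where I="?K" and F="E \<rho> \<mu>" and c="\<lambda>k. Q k i" and n=n] Em by simp
      also have "\<dots> = lincomb_m n ?K (\<lambda>k. cnj (Q k i)) (\<lambda>k. adj (E \<rho> \<mu> k) * X)"
        by (rule mult_lincomb_right) (use X Em in auto)
      finally have "adj (lincomb_m n ?K (\<lambda>k. Q k i) (E \<rho> \<mu>)) * X * lincomb_m n ?K (\<lambda>k. Q k i) (E \<rho> \<nu>)
         = lincomb_m n ?K (\<lambda>k. cnj (Q k i)) (\<lambda>k. adj (E \<rho> \<mu> k) * X) * lincomb_m n ?K (\<lambda>k. Q k i) (E \<rho> \<nu>)" by simp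
      also have "\<dots> = lincomb_m n ?K (\<lambda>k. cnj (Q k i)) (\<lambda>k. adj (E \<rho> \<mu> k) * X * lincomb_m n ?K (\<lambda>k. Q k i) (E \<rho> \<nu>))"
        by (rule mult_lincomb_right) (use X Em in auto)
      also have "\<dots> = lincomb_m n ?K (\<lambda>k. cnj (Q k i)) (\<lambda>k. lincomb_m n ?K (\<lambda>l. Q l i) (\<lambda>l. adj (E \<rho> \<mu> k) * X * E \<rho> \<nu> l))"
        by (intro lincomb_cong refl mult_lincomb_left) (use X Em En in auto)
      finally show "adj (lincomb_m n ?K (\<lambda>k. Q k i) (E \<rho> \<mu>)) * X * lincomb_m n ?K (\<lambda>k. Q k i) (E \<rho> \<nu>)
         = lincomb_m n ?K (\<lambda>k. cnj (Q k i)) (\<lambda>k. lincomb_m n ?K (\<lambda>l. Q l i) (\<lambda>l. adj (E \<rho> \<mu> k) * X * E \<rho> \<nu> l))" .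
    qed
    hence "C g (adj (C h (E \<rho> \<mu> i)) * X * C h (E \<rho> \<nu> i)) = C g (lincomb_m n ?K (\<lambda>k. cnj (Q k i)) (\<lambda>k. lincomb_m n ?K (\<lambda>l. Q l i) (\<lambda>l. adj (E \<rho> \<mu> k) * X * E \<rho> \<nu> l)))"
      by simp
    also have "\<dots> = lincomb_m n ?K (\<lambda>k. cnj (Q k i)) (\<lambda>k. C g (lincomb_m n ?K (\<lambda>l. Q l i) (\<lambda>l. adj (E \<rho> \<mu> k) * X * E \<rho> \<nu> l)))"
      by (rule C_lincomb) (use g in auto)
    also have "\<dots> = lincomb_m n ?K (\<lambda>k. cnj (Q k i)) (\<lambda>k. lincomb_m n ?K (\<lambda>l. Q l i) (\<lambda>l. C g (adj (E \<rho> \<mu> k) * X * E \<rho> \<nu> l)))"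
      by (intro lincomb_cong refl C_lincomb) (use g r X in auto)
    finally show ?thesis .
  qed
  have delta: "(\<Sum>i\<in>?K. cnj (Q k i) * Q l i) = (if k = l then 1 else 0)" if "k \<in> ?K" "l \<in> ?K" for k l
  proof -
    have "(\<Sum>i\<in>?K. cnj (Q k i) * Q l i) = cnj (\<Sum>i\<in>?K. cnj (R \<rho> 0 g i k) * R \<rho> 0 g i l)"
      unfolding Q_def h_def using that r m0 g by (auto simp: R_inv mult.commute intro!: sum.cong)
    also have "\<dots> = (if k = l then 1 else 0)" using R_unitary[OF r(1) m0 _ _ g, of k l] that by auto
    finally show ?thesis .
  qed
  have "T \<rho> \<mu> \<nu> (C g X) = lincomb_m n ?K (\<lambda>i. 1) (\<lambda>i. lincomb_m n ?K (\<lambda>k. cnj (Q k i))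
      (\<lambda>k. lincomb_m n ?K (\<lambda>l. Q l i) (\<lambda>l. C g (adj (E \<rho> \<mu> k) * X * E \<rho> \<nu> l))))"
    unfolding Twirl_unit_def by (intro lincomb_cong refl) (simp add: step1 step2)
  also have "\<dots> = lincomb_m n ?K (\<lambda>k. 1) (\<lambda>k. C g (adj (E \<rho> \<mu> k) * X * E \<rho> \<nu> k))"
    by (rule lincomb_collapse) (auto simp: delta)
  also have "\<dots> = C g (T \<rho> \<mu> \<nu> X)"
    unfolding Twirl_unit_def by (rule C_lincomb[symmetric]) (use g r X in auto)
  finally show ?thesis .
qed

definition crd where "crd \<xi> X = vec (d \<xi>) (\<lambda>i. hs_inner (E \<xi> 0 i) X)"
definition syn where "syn \<xi> v = lincomb_m n {..<d \<xi>} (\<lambda>i. v $ i) (E \<xi> 0)"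
definition Rm where "Rm \<xi> g = mat (d \<xi>) (d \<xi>) (\<lambda>(i,j). R \<xi> 0 g i j)"

lemma crd_car[simp]: "crd \<xi> X \<in> carrier_vec (d \<xi>)" by (simp add: crd_def)
lemma syn_car[simp]: "syn \<xi> v \<in> carrier_mat n n" by (simp add: syn_def)
lemma Rm_car[simp]: "Rm \<xi> g \<in> carrier_mat (d \<xi>) (d \<xi>)" by (simp add: Rm_def)
lemma Rm_dims[simp]: "dim_row (Rm \<xi> g) = d \<xi>" "dim_col (Rm \<xi> g) = d \<xi>" by (simp_all add: Rm_def)

lemma syn_blk: "syn \<xi> v \<in> blk \<xi> 0"
  unfolding syn_def irrep_block_def span_m_def by blast

lemma crd_syn: assumes "\<xi> \<in> Xi" "v \<in> carrier_vec (d \<xi>)" shows "crd \<xi> (syn \<xi> v) = v"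
proof -
  have m0: "0 < m \<xi>" using m_pos assms by auto
  show ?thesis using assms unfolding crd_def syn_def
    by (intro eq_vecI) (auto simp: onf_coord[OF onf_blk[OF assms(1) m0]])
qed

lemma syn_crd: assumes "\<xi> \<in> Xi" "X \<in> blk \<xi> 0" shows "syn \<xi> (crd \<xi> X) = X"
proof -
  have m0: "0 < m \<xi>" using m_pos assms by auto
  have "X = lincomb_m n {..<d \<xi>} (\<lambda>i. hs_inner (E \<xi> 0 i) X) (E \<xi> 0)" using blk_expand[OF assms(1) m0 assms(2)] .
  also have "\<dots> = syn \<xi> (crd \<xi> X)" unfolding syn_def crd_def by (intro lincomb_cong) auto
  finally show ?thesis by simp
qed

lemma syn_add: assumes "v \<in> carrier_vec (d \<xi>)" "w \<in> carrier_vec (d \<xi>)"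
  shows "syn \<xi> (v + w) = syn \<xi> v + syn \<xi> w"
  unfolding syn_def lincomb_add using assms by (intro lincomb_cong) auto

lemma syn_smult: assumes "v \<in> carrier_vec (d \<xi>)"
  shows "syn \<xi> (c \<cdot>\<^sub>v v) = c \<cdot>\<^sub>m syn \<xi> v"
  unfolding syn_def lincomb_smult using assms by (intro lincomb_cong) auto

lemma syn_zero: "syn \<xi> (0\<^sub>v (d \<xi>)) = 0\<^sub>m n n"
proof -
  have "syn \<xi> (0\<^sub>v (d \<xi>)) = lincomb_m n {..<d \<xi>} (\<lambda>i. 0) (E \<xi> 0)"
    unfolding syn_def by (intro lincomb_cong) auto
  thus ?thesis by (simp add: lincomb_zero)
qed

lemma C_syn: assumes "\<xi> \<in> Xi" "g \<in> carrier G" "v \<in> carrier_vec (d \<xi>)"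
  shows "C g (syn \<xi> v) = syn \<xi> (Rm \<xi> g *\<^sub>v v)"
proof -
  have m0: "0 < m \<xi>" using m_pos assms by auto
  have "C g (syn \<xi> v) = lincomb_m n {..<d \<xi>} (\<lambda>j. v $ j) (\<lambda>j. C g (E \<xi> 0 j))"
    unfolding syn_def by (rule C_lincomb) (use assms m0 in auto)
  also have "\<dots> = lincomb_m n {..<d \<xi>} (\<lambda>j. v $ j) (\<lambda>j. lincomb_m n {..<d \<xi>} (\<lambda>i. R \<xi> 0 g i j) (E \<xi> 0))"
    by (intro lincomb_cong refl CE_expand) (use assms m0 in auto)
  also have "\<dots> = lincomb_m n {..<d \<xi>} (\<lambda>i. \<Sum>j<d \<xi>. v $ j * R \<xi> 0 g i j) (E \<xi> 0)"
    by (rule lincomb_lincomb) auto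
  also have "\<dots> = syn \<xi> (Rm \<xi> g *\<^sub>v v)"
    unfolding syn_def Rm_def using assms
    by (intro lincomb_cong refl) (auto simp: scalar_prod_def atLeast0LessThan mult.commute intro!: sum.cong)
  finally show ?thesis .
qed

lemma crd_C: assumes "\<xi> \<in> Xi" "g \<in> carrier G" "X \<in> blk \<xi> 0"
  shows "crd \<xi> (C g X) = Rm \<xi> g *\<^sub>v crd \<xi> X"
proof -
  have "C g X = C g (syn \<xi> (crd \<xi> X))" using syn_crd[OF assms(1,3)] by simp
  also have "\<dots> = syn \<xi> (Rm \<xi> g *\<^sub>v crd \<xi> X)" using C_syn assms by simp
  finally show ?thesis using crd_syn[OF assms(1) mult_mat_vec_carrier[OF Rm_car crd_car]] by simp
qed

lemma irr_vec: fixes U :: "complex vec set" assumes xi: "\<xi> \<in> Xi" and U: "U \<subseteq> carrier_vec (d \<xi>)" "0\<^sub>v (d \<xi>) \<in> U"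
  "\<And>v w. v \<in> U \<Longrightarrow> w \<in> U \<Longrightarrow> v + w \<in> U" "\<And>c v. v \<in> U \<Longrightarrow> c \<cdot>\<^sub>v v \<in> U"
  "\<And>g v. g \<in> carrier G \<Longrightarrow> v \<in> U \<Longrightarrow> Rm \<xi> g *\<^sub>v v \<in> U"
  shows "U = {0\<^sub>v (d \<xi>)} \<or> U = carrier_vec (d \<xi>)"
proof -
  have m0: "0 < m \<xi>" using m_pos xi by auto
  define W where "W = syn \<xi> ` U"
  have ms: "msubspace n W" unfolding msubspace_def W_def
  proof (intro conjI ballI allI)
    show "syn \<xi> ` U \<subseteq> carrier_mat n n" by auto
    show "0\<^sub>m n n \<in> syn \<xi> ` U" using U(2) syn_zero by (metis image_eqI)
  next
    fix X Y assume "X \<in> syn \<xi> ` U" "Y \<in> syn \<xi> ` U"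
    then obtain v w where "v \<in> U" "w \<in> U" "X = syn \<xi> v" "Y = syn \<xi> w" by auto
    thus "X + Y \<in> syn \<xi> ` U" using syn_add[of v \<xi> w] U by (metis image_eqI subsetD)
  next
    fix c X assume "X \<in> syn \<xi> ` U"
    then obtain v where "v \<in> U" "X = syn \<xi> v" by auto
    thus "c \<cdot>\<^sub>m X \<in> syn \<xi> ` U" using syn_smult[of v \<xi> c] U by (metis image_eqI subsetD)
  qed
  have sub: "W \<subseteq> blk \<xi> 0" unfolding W_def using syn_blk by auto
  have inv: "invariant_sub G rep W" unfolding invariant_sub_def W_def
  proof (intro ballI)
    fix g X assume "g \<in> carrier G" "X \<in> syn \<xi> ` U"
    then obtain v where "v \<in> U" "X = syn \<xi> v" by auto
    thus "C g X \<in> syn \<xi> ` U" using C_syn[OF xi \<open>g \<in> carrier G\<close>, of v] U \<open>g \<in> carrier G\<close> by auto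
  qed
  have "W = {0\<^sub>m n n} \<or> W = blk \<xi> 0" using irr[OF xi m0] ms sub inv unfolding irreducible_sub_def by blast
  thus ?thesis
  proof
    assume W0: "W = {0\<^sub>m n n}"
    have "U \<subseteq> {0\<^sub>v (d \<xi>)}"
    proof
      fix v assume v: "v \<in> U"
      hence "syn \<xi> v = 0\<^sub>m n n" using W0 unfolding W_def by auto
      hence "crd \<xi> (syn \<xi> v) = crd \<xi> (syn \<xi> (0\<^sub>v (d \<xi>)))" by (simp add: syn_zero)
      thus "v \<in> {0\<^sub>v (d \<xi>)}" using crd_syn[OF xi] v U by auto
    qed
    thus ?thesis using U(2) by auto
  next
    assume Wb: "W = blk \<xi> 0"
    have "carrier_vec (d \<xi>) \<subseteq> U"
    proof
      fix w :: "complex vec" assume w: "w \<in> carrier_vec (d \<xi>)"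
      have "syn \<xi> w \<in> W" using Wb syn_blk by auto
      then obtain v where v: "v \<in> U" "syn \<xi> w = syn \<xi> v" unfolding W_def by auto
      hence "w = v" using crd_syn[OF xi] w U by (metis subsetD)
      thus "w \<in> U" using v by simp
    qed
    thus ?thesis using U by auto
  qed
qed

lemma d_pos: assumes "\<xi> \<in> Xi" shows "0 < d \<xi>"
proof (rule ccontr)
  assume "\<not> 0 < d \<xi>"
  hence d0: "d \<xi> = 0" by simp
  have m0: "0 < m \<xi>" using m_pos assms by auto
  have "blk \<xi> 0 = {0\<^sub>m n n}" unfolding irrep_block_def span_m_def d0
    using lincomb_zero[of n "{}::nat set"] by (auto simp: lincomb_m_def)
  thus False using irr[OF assms m0] unfolding irreducible_sub_def by blast
qed

lemma entry_unit: assumes "(F::complex mat) \<in> carrier_mat a b" "i < a" "j < b"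
  shows "F $$ (i,j) = (F *\<^sub>v unit_vec b j) $ i"
  using assms by auto

lemma schur_scalar: assumes xi: "\<xi> \<in> Xi" and F: "F \<in> carrier_mat (d \<xi>) (d \<xi>)"
  and comm: "\<And>g. g \<in> carrier G \<Longrightarrow> F * Rm \<xi> g = Rm \<xi> g * F"
  shows "\<exists>lam. \<forall>i<d \<xi>. \<forall>j<d \<xi>. F $$ (i,j) = (if i = j then lam else 0)"
proof -
  obtain lam where "lam \<in> spectrum F" using spectrum_non_empty[OF F d_pos[OF xi]] by auto
  then obtain v0 where v0: "v0 \<in> carrier_vec (d \<xi>)" "v0 \<noteq> 0\<^sub>v (d \<xi>)" "F *\<^sub>v v0 = lam \<cdot>\<^sub>v v0"
    unfolding spectrum_def eigenvalue_def eigenvector_def using F by auto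
  define U where "U = {v \<in> carrier_vec (d \<xi>). F *\<^sub>v v = lam \<cdot>\<^sub>v v}"
  have "U = {0\<^sub>v (d \<xi>)} \<or> U = carrier_vec (d \<xi>)"
  proof (rule irr_vec[OF xi])
    show "U \<subseteq> carrier_vec (d \<xi>)" unfolding U_def by auto
    show "0\<^sub>v (d \<xi>) \<in> U" unfolding U_def using F by auto
    fix v w assume "v \<in> U" "w \<in> U"
    thus "v + w \<in> U" unfolding U_def using F
      by (auto simp: mult_add_distrib_mat_vec[OF F] smult_add_distrib_vec)
  next
    fix c v assume "v \<in> U"
    thus "c \<cdot>\<^sub>v v \<in> U" unfolding U_def using F
      by (auto simp: mult_mat_vec[OF F] smult_smult_assoc mult.commute)
  next
    fix g v assume g: "g \<in> carrier G" and "v \<in> U"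
    hence v: "v \<in> carrier_vec (d \<xi>)" "F *\<^sub>v v = lam \<cdot>\<^sub>v v" unfolding U_def by auto
    have "F *\<^sub>v (Rm \<xi> g *\<^sub>v v) = (F * Rm \<xi> g) *\<^sub>v v" using assoc_mult_mat_vec[OF F Rm_car v(1)] by simp
    also have "\<dots> = Rm \<xi> g *\<^sub>v (F *\<^sub>v v)" using comm[OF g] assoc_mult_mat_vec[OF Rm_car F v(1)] by simp
    also have "\<dots> = lam \<cdot>\<^sub>v (Rm \<xi> g *\<^sub>v v)" using v by (simp add: mult_mat_vec[OF Rm_car])
    finally show "Rm \<xi> g *\<^sub>v v \<in> U" unfolding U_def using mult_mat_vec_carrier[OF Rm_car v(1)] by simp
  qed
  moreover have "v0 \<in> U" "v0 \<noteq> 0\<^sub>v (d \<xi>)" using v0 unfolding U_def by auto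
  ultimately have U: "U = carrier_vec (d \<xi>)" by auto
  have "F $$ (i,j) = (if i = j then lam else 0)" if "i < d \<xi>" "j < d \<xi>" for i j
  proof -
    have "unit_vec (d \<xi>) j \<in> U" using U by simp
    hence "F *\<^sub>v unit_vec (d \<xi>) j = lam \<cdot>\<^sub>v unit_vec (d \<xi>) j" unfolding U_def by auto
    thus ?thesis using entry_unit[OF F that] that by simp
  qed
  thus ?thesis by blast
qed


lemma schur_zero: assumes xi: "\<xi> \<in> Xi" and eta: "\<eta> \<in> Xi" and ne: "\<xi> \<noteq> \<eta>"
  and F: "F \<in> carrier_mat (d \<eta>) (d \<xi>)"
  and comm: "\<And>g. g \<in> carrier G \<Longrightarrow> F * Rm \<xi> g = Rm \<eta> g * F"
  shows "\<forall>i<d \<eta>. \<forall>j<d \<xi>. F $$ (i,j) = 0"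
proof (rule ccontr)
  assume "\<not> (\<forall>i<d \<eta>. \<forall>j<d \<xi>. F $$ (i,j) = 0)"
  then obtain i0 j0 where ij0: "i0 < d \<eta>" "j0 < d \<xi>" "F $$ (i0,j0) \<noteq> 0" by auto
  have Fu: "F *\<^sub>v unit_vec (d \<xi>) j0 \<noteq> 0\<^sub>v (d \<eta>)"
    using ij0 entry_unit[OF F ij0(1,2)] by auto
  have F0: "F *\<^sub>v 0\<^sub>v (d \<xi>) = 0\<^sub>v (d \<eta>)" using F by (intro eq_vecI) auto
  define U where "U = {v \<in> carrier_vec (d \<xi>). F *\<^sub>v v = 0\<^sub>v (d \<eta>)}"
  have "U = {0\<^sub>v (d \<xi>)} \<or> U = carrier_vec (d \<xi>)"
  proof (rule irr_vec[OF xi])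
    show "U \<subseteq> carrier_vec (d \<xi>)" unfolding U_def by auto
    show "0\<^sub>v (d \<xi>) \<in> U" unfolding U_def using F0 by auto
    fix v w assume "v \<in> U" "w \<in> U"
    thus "v + w \<in> U" unfolding U_def using F
      by (auto simp: mult_add_distrib_mat_vec[OF F])
  next
    fix c v assume "v \<in> U"
    thus "c \<cdot>\<^sub>v v \<in> U" unfolding U_def using F
      by (auto simp: mult_mat_vec[OF F])
  next
    fix g v assume g: "g \<in> carrier G" and "v \<in> U"
    hence v: "v \<in> carrier_vec (d \<xi>)" "F *\<^sub>v v = 0\<^sub>v (d \<eta>)" unfolding U_def by auto
    have "F *\<^sub>v (Rm \<xi> g *\<^sub>v v) = (F * Rm \<xi> g) *\<^sub>v v" using assoc_mult_mat_vec[OF F Rm_car v(1)] by simp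
    also have "\<dots> = Rm \<eta> g *\<^sub>v (F *\<^sub>v v)" using comm[OF g] assoc_mult_mat_vec[OF Rm_car F v(1)] by simp
    also have "\<dots> = 0\<^sub>v (d \<eta>)" using v by (intro eq_vecI) (auto simp: Rm_def scalar_prod_def)
    finally show "Rm \<xi> g *\<^sub>v v \<in> U" unfolding U_def using mult_mat_vec_carrier[OF Rm_car v(1)] by simp
  qed
  moreover have "unit_vec (d \<xi>) j0 \<notin> U" using Fu unfolding U_def by auto
  ultimately have U0: "U = {0\<^sub>v (d \<xi>)}" by auto
  have inj: "a = b" if "a \<in> carrier_vec (d \<xi>)" "b \<in> carrier_vec (d \<xi>)" "F *\<^sub>v a = F *\<^sub>v b" for a b
  proof -
    have "F *\<^sub>v (a - b) = F *\<^sub>v a - F *\<^sub>v b" using mult_minus_distrib_mat_vec[OF F that(1,2)] .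
    also have "\<dots> = 0\<^sub>v (d \<eta>)" using that F by (intro eq_vecI) auto
    finally have "a - b \<in> U" unfolding U_def using that by auto
    hence "a - b = 0\<^sub>v (d \<xi>)" using U0 by auto
    thus "a = b" using that by (metis (no_types, lifting) eq_vecI carrier_vecD index_minus_vec(1) index_zero_vec(1) eq_iff_diff_eq_0)
  qed
  define V where "V = {F *\<^sub>v v | v. v \<in> carrier_vec (d \<xi>)}"
  have "V = {0\<^sub>v (d \<eta>)} \<or> V = carrier_vec (d \<eta>)"
  proof (rule irr_vec[OF eta])
    show "V \<subseteq> carrier_vec (d \<eta>)" unfolding V_def using F by auto
    show "0\<^sub>v (d \<eta>) \<in> V" unfolding V_def using F0 by (metis (mono_tags, lifting) mem_Collect_eq zero_carrier_vec)
    fix v w assume "v \<in> V" "w \<in> V"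
    then obtain a b where "a \<in> carrier_vec (d \<xi>)" "b \<in> carrier_vec (d \<xi>)" "v = F *\<^sub>v a" "w = F *\<^sub>v b"
      unfolding V_def by auto
    thus "v + w \<in> V" unfolding V_def using mult_add_distrib_mat_vec[OF F] by (metis (mono_tags, lifting) add_carrier_vec mem_Collect_eq)
  next
    fix c v assume "v \<in> V"
    then obtain a where "a \<in> carrier_vec (d \<xi>)" "v = F *\<^sub>v a" unfolding V_def by auto
    thus "c \<cdot>\<^sub>v v \<in> V" unfolding V_def using mult_mat_vec[OF F] by (metis (mono_tags, lifting) smult_carrier_vec mem_Collect_eq)
  next
    fix g v assume g: "g \<in> carrier G" and "v \<in> V"
    then obtain a where a: "a \<in> carrier_vec (d \<xi>)" "v = F *\<^sub>v a" unfolding V_def by auto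
    have "Rm \<eta> g *\<^sub>v v = (Rm \<eta> g * F) *\<^sub>v a" using assoc_mult_mat_vec[OF Rm_car F a(1)] a by simp
    also have "\<dots> = F *\<^sub>v (Rm \<xi> g *\<^sub>v a)" by (metis comm[OF g] assoc_mult_mat_vec[OF F Rm_car a(1)])
    finally show "Rm \<eta> g *\<^sub>v v \<in> V" unfolding V_def using mult_mat_vec_carrier[OF Rm_car a(1)] by blast
  qed
  moreover have "F *\<^sub>v unit_vec (d \<xi>) j0 \<in> V" unfolding V_def by auto
  ultimately have V: "V = carrier_vec (d \<eta>)" using Fu by auto
  define f where "f X = syn \<eta> (F *\<^sub>v crd \<xi> X)" for X
  have m0: "0 < m \<xi>" using m_pos xi by auto
  have crd_add: "crd \<xi> (X + Y) = crd \<xi> X + crd \<xi> Y" if "X \<in> blk \<xi> 0" "Y \<in> blk \<xi> 0" for X Y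
  proof -
    have "X + Y = syn \<xi> (crd \<xi> X + crd \<xi> Y)" using syn_add[of "crd \<xi> X" \<xi> "crd \<xi> Y"] syn_crd[OF xi] that by simp
    thus ?thesis using crd_syn[OF xi] by simp
  qed
  have crd_smult: "crd \<xi> (c \<cdot>\<^sub>m X) = c \<cdot>\<^sub>v crd \<xi> X" if "X \<in> blk \<xi> 0" for X c
  proof -
    have "c \<cdot>\<^sub>m X = syn \<xi> (c \<cdot>\<^sub>v crd \<xi> X)" using syn_smult[of "crd \<xi> X" \<xi> c] syn_crd[OF xi] that by simp
    thus ?thesis using crd_syn[OF xi] by simp
  qed
  have "equiv_iso G rep (blk \<xi> 0) (blk \<eta> 0) f"
    unfolding equiv_iso_def
  proof (intro conjI ballI allI)
    show "bij_betw f (blk \<xi> 0) (blk \<eta> 0)" unfolding bij_betw_def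
    proof
      show "inj_on f (blk \<xi> 0)"
      proof
        fix X Y assume XY: "X \<in> blk \<xi> 0" "Y \<in> blk \<xi> 0" "f X = f Y"
        hence "crd \<eta> (f X) = crd \<eta> (f Y)" by simp
        hence "F *\<^sub>v crd \<xi> X = F *\<^sub>v crd \<xi> Y" unfolding f_def using crd_syn[OF eta] F by simp
        hence "crd \<xi> X = crd \<xi> Y" using inj by simp
        thus "X = Y" using syn_crd[OF xi] XY by metis
      qed
      show "f ` blk \<xi> 0 = blk \<eta> 0"
      proof
        show "f ` blk \<xi> 0 \<subseteq> blk \<eta> 0" unfolding f_def using syn_blk by auto
        show "blk \<eta> 0 \<subseteq> f ` blk \<xi> 0"
        proof
          fix Z assume Z: "Z \<in> blk \<eta> 0"
          have "crd \<eta> Z \<in> V" using V by simp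
          then obtain a where a: "a \<in> carrier_vec (d \<xi>)" "crd \<eta> Z = F *\<^sub>v a" unfolding V_def by auto
          have "f (syn \<xi> a) = Z" unfolding f_def using crd_syn[OF xi a(1)] a(2) syn_crd[OF eta Z] by simp
          thus "Z \<in> f ` blk \<xi> 0" using syn_blk by (metis image_eqI)
        qed
      qed
    qed
  next
    fix X Y assume XY: "X \<in> blk \<xi> 0" "Y \<in> blk \<xi> 0"
    show "f (X + Y) = f X + f Y" unfolding f_def crd_add[OF XY]
      using mult_add_distrib_mat_vec[OF F crd_car crd_car] syn_add F by simp
  next
    fix c X assume X: "X \<in> blk \<xi> 0"
    show "f (c \<cdot>\<^sub>m X) = c \<cdot>\<^sub>m f X" unfolding f_def crd_smult[OF X]
      using mult_mat_vec[OF F crd_car] syn_smult F by simp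
  next
    fix g X assume g: "g \<in> carrier G" and X: "X \<in> blk \<xi> 0"
    have "f (C g X) = syn \<eta> (F *\<^sub>v (Rm \<xi> g *\<^sub>v crd \<xi> X))" unfolding f_def crd_C[OF xi g X] ..
    also have "\<dots> = syn \<eta> (Rm \<eta> g *\<^sub>v (F *\<^sub>v crd \<xi> X))"
      by (metis comm[OF g] assoc_mult_mat_vec[OF F Rm_car crd_car] assoc_mult_mat_vec[OF Rm_car F crd_car])
    also have "\<dots> = C g (f X)" unfolding f_def using C_syn[OF eta g] F by simp
    finally show "f (C g X) = C g (f X)" .
  qed
  thus False using IDc(8) xi eta ne by blast
qed

definition tau where "tau \<rho> \<mu> \<nu> \<xi>' \<beta> i' \<xi> \<alpha> i = hs_inner (E \<xi>' \<beta> i') (T \<rho> \<mu> \<nu> (E \<xi> \<alpha> i))"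

definition lamb where "lamb \<rho> \<mu> \<nu> \<xi> \<alpha> \<beta> = (1 / of_nat (d \<xi>)) * (\<Sum>j<d \<xi>. tau \<rho> \<mu> \<nu> \<xi> \<beta> j \<xi> \<alpha> j)"

lemma Rm_entry: assumes "\<xi> \<in> Xi" "\<alpha> < m \<xi>" "i < d \<xi>" "j < d \<xi>" "g \<in> carrier G"
  shows "Rm \<xi> g $$ (i,j) = R \<xi> \<alpha> g i j"
  using assms R_copy[OF assms] by (simp add: Rm_def)

lemma tau_comm: assumes r: "\<rho> \<in> Xi" "\<mu> < m \<rho>" "\<nu> < m \<rho>"
  and xi: "\<xi> \<in> Xi" "\<alpha> < m \<xi>" and xi': "\<xi>' \<in> Xi" "\<beta> < m \<xi>'" and g: "g \<in> carrier G"
  shows "mat (d \<xi>') (d \<xi>) (\<lambda>(i',i). tau \<rho> \<mu> \<nu> \<xi>' \<beta> i' \<xi> \<alpha> i) * Rm \<xi> g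
       = Rm \<xi>' g * mat (d \<xi>') (d \<xi>) (\<lambda>(i',i). tau \<rho> \<mu> \<nu> \<xi>' \<beta> i' \<xi> \<alpha> i)"
proof (rule eq_matI)
  fix i' j assume "i' < dim_row (Rm \<xi>' g * mat (d \<xi>') (d \<xi>) (\<lambda>(i',i). tau \<rho> \<mu> \<nu> \<xi>' \<beta> i' \<xi> \<alpha> i))"
    "j < dim_col (Rm \<xi>' g * mat (d \<xi>') (d \<xi>) (\<lambda>(i',i). tau \<rho> \<mu> \<nu> \<xi>' \<beta> i' \<xi> \<alpha> i))"
  hence ij: "i' < d \<xi>'" "j < d \<xi>" by (auto simp: Rm_def)
  have m0: "0 < m \<xi>" "0 < m \<xi>'" using m_pos xi xi' by auto
  have h: "inv\<^bsub>G\<^esub> g \<in> carrier G" using g by simp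
  have "(mat (d \<xi>') (d \<xi>) (\<lambda>(i',i). tau \<rho> \<mu> \<nu> \<xi>' \<beta> i' \<xi> \<alpha> i) * Rm \<xi> g) $$ (i',j)
      = (\<Sum>i<d \<xi>. R \<xi> \<alpha> g i j * hs_inner (E \<xi>' \<beta> i') (T \<rho> \<mu> \<nu> (E \<xi> \<alpha> i)))"
    using ij xi g by (auto simp: tau_def scalar_prod_def atLeast0LessThan Rm_entry[OF xi(1,2) _ _ g] mult.commute intro!: sum.cong)
  also have "\<dots> = hs_inner (E \<xi>' \<beta> i') (T \<rho> \<mu> \<nu> (lincomb_m n {..<d \<xi>} (\<lambda>i. R \<xi> \<alpha> g i j) (E \<xi> \<alpha>)))"
  proof -
    have "T \<rho> \<mu> \<nu> (lincomb_m n {..<d \<xi>} (\<lambda>i. R \<xi> \<alpha> g i j) (E \<xi> \<alpha>)) =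
        lincomb_m n {..<d \<xi>} (\<lambda>i. R \<xi> \<alpha> g i j) (\<lambda>i. T \<rho> \<mu> \<nu> (E \<xi> \<alpha> i))"
      by (rule T_lincomb[OF r]) (use xi in auto)
    thus ?thesis using xi' ij by (simp add: hs_lincomb_right mult.commute)
  qed
  also have "\<dots> = hs_inner (E \<xi>' \<beta> i') (C g (T \<rho> \<mu> \<nu> (E \<xi> \<alpha> j)))"
    using CE_expand[OF xi ij(2) g] T_equiv[OF r g, of "E \<xi> \<alpha> j"] xi ij by simp
  also have "\<dots> = hs_inner (C (inv\<^bsub>G\<^esub> g) (E \<xi>' \<beta> i')) (T \<rho> \<mu> \<nu> (E \<xi> \<alpha> j))"
    using C_adjoint g xi' ij by simp
  also have "\<dots> = hs_inner (lincomb_m n {..<d \<xi>'} (\<lambda>k. R \<xi>' \<beta> (inv\<^bsub>G\<^esub> g) k i') (E \<xi>' \<beta>)) (T \<rho> \<mu> \<nu> (E \<xi> \<alpha> j))"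
    using CE_expand[OF xi' ij(1) h] by simp
  also have "\<dots> = (\<Sum>k<d \<xi>'. cnj (R \<xi>' \<beta> (inv\<^bsub>G\<^esub> g) k i') * hs_inner (E \<xi>' \<beta> k) (T \<rho> \<mu> \<nu> (E \<xi> \<alpha> j)))"
    by (rule hs_lincomb_left) (use xi' in auto)
  also have "\<dots> = (Rm \<xi>' g * mat (d \<xi>') (d \<xi>) (\<lambda>(i',i). tau \<rho> \<mu> \<nu> \<xi>' \<beta> i' \<xi> \<alpha> i)) $$ (i',j)"
    using ij xi' g by (auto simp: tau_def scalar_prod_def atLeast0LessThan Rm_entry[OF xi'(1,2) _ _ g] R_inv intro!: sum.cong)
  finally show "(mat (d \<xi>') (d \<xi>) (\<lambda>(i',i). tau \<rho> \<mu> \<nu> \<xi>' \<beta> i' \<xi> \<alpha> i) * Rm \<xi> g) $$ (i',j)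
     = (Rm \<xi>' g * mat (d \<xi>') (d \<xi>) (\<lambda>(i',i). tau \<rho> \<mu> \<nu> \<xi>' \<beta> i' \<xi> \<alpha> i)) $$ (i',j)" .
qed (auto simp: Rm_def)

lemma tau_form: assumes r: "\<rho> \<in> Xi" "\<mu> < m \<rho>" "\<nu> < m \<rho>"
  and xi: "\<xi> \<in> Xi" "\<alpha> < m \<xi>" "i < d \<xi>" and xi': "\<xi>' \<in> Xi" "\<beta> < m \<xi>'" "i' < d \<xi>'"
  shows "tau \<rho> \<mu> \<nu> \<xi>' \<beta> i' \<xi> \<alpha> i = (if \<xi>' = \<xi> \<and> i' = i then lamb \<rho> \<mu> \<nu> \<xi> \<alpha> \<beta> else 0)"
proof (cases "\<xi>' = \<xi>")
  case False
  have "\<forall>i'<d \<xi>'. \<forall>i<d \<xi>. mat (d \<xi>') (d \<xi>) (\<lambda>(i',i). tau \<rho> \<mu> \<nu> \<xi>' \<beta> i' \<xi> \<alpha> i) $$ (i',i) = 0"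
    using False by (intro schur_zero[OF xi(1) xi'(1)] tau_comm[OF r xi(1,2) xi'(1,2)]) auto
  thus ?thesis using False xi xi' by auto
next
  case True
  obtain lam where lam: "\<forall>i'<d \<xi>. \<forall>i<d \<xi>. mat (d \<xi>) (d \<xi>) (\<lambda>(i',i). tau \<rho> \<mu> \<nu> \<xi> \<beta> i' \<xi> \<alpha> i) $$ (i',i)
      = (if i' = i then lam else 0)"
    using schur_scalar[OF xi(1), of "mat (d \<xi>) (d \<xi>) (\<lambda>(i',i). tau \<rho> \<mu> \<nu> \<xi> \<beta> i' \<xi> \<alpha> i)"]
      tau_comm[OF r xi(1,2) xi(1) xi'(2)[unfolded True]] by auto
  hence lam': "tau \<rho> \<mu> \<nu> \<xi> \<beta> i' \<xi> \<alpha> i = (if i' = i then lam else 0)" if "i' < d \<xi>" "i < d \<xi>" for i' i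
    using that by auto
  have "lamb \<rho> \<mu> \<nu> \<xi> \<alpha> \<beta> = (1 / of_nat (d \<xi>)) * (\<Sum>j<d \<xi>. lam)"
    unfolding lamb_def by (simp add: lam')
  also have "\<dots> = lam" using d_pos[OF xi(1)] by simp
  finally show ?thesis using True lam' xi xi' by auto
qed

abbreviation Pi where "Pi \<xi> \<alpha> \<beta> X \<equiv> Pi_unit n d E \<xi> \<alpha> \<beta> X"

lemma Pi_hs: assumes "\<xi> \<in> Xi" "\<beta> < m \<xi>" "Y \<in> carrier_mat n n"
  shows "hs_inner (Pi \<xi> \<alpha> \<beta> X) Y = (\<Sum>i<d \<xi>. cnj (hs_inner (E \<xi> \<alpha> i) X) * hs_inner (E \<xi> \<beta> i) Y)"
  unfolding Pi_unit_def by (rule hs_lincomb_left) (use assms in auto)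

lemma super_Pi_T: assumes r: "\<rho> \<in> Xi" "\<mu> < m \<rho>" "\<nu> < m \<rho>" and xi: "\<xi> \<in> Xi" "\<alpha> < m \<xi>" "\<beta> < m \<xi>"
  shows "super_inner n (Pi \<xi> \<alpha> \<beta>) (T \<rho> \<mu> \<nu>) = (\<Sum>i<d \<xi>. tau \<rho> \<mu> \<nu> \<xi> \<beta> i \<xi> \<alpha> i)"
proof -
  let ?U = "\<lambda>q. mat_unit n (fst q) (snd q)"
  have "super_inner n (Pi \<xi> \<alpha> \<beta>) (T \<rho> \<mu> \<nu>) = (\<Sum>q\<in>QQ n. hs_inner (Pi \<xi> \<alpha> \<beta> (?U q)) (T \<rho> \<mu> \<nu> (?U q)))"
    unfolding super_inner_def sum_QQ[symmetric] by simp
  also have "\<dots> = (\<Sum>q\<in>QQ n. \<Sum>i<d \<xi>. E \<xi> \<alpha> i $$ q * hs_inner (E \<xi> \<beta> i) (T \<rho> \<mu> \<nu> (?U q)))"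
  proof (intro sum.cong refl)
    fix q assume q: "q \<in> QQ n"
    show "hs_inner (Pi \<xi> \<alpha> \<beta> (?U q)) (T \<rho> \<mu> \<nu> (?U q)) = (\<Sum>i<d \<xi>. E \<xi> \<alpha> i $$ q * hs_inner (E \<xi> \<beta> i) (T \<rho> \<mu> \<nu> (?U q)))"
      unfolding Pi_hs[OF xi(1,3) T_car]
    proof (intro sum.cong refl)
      fix i assume "i \<in> {..<d \<xi>}"
      hence "cnj (hs_inner (E \<xi> \<alpha> i) (?U q)) = E \<xi> \<alpha> i $$ q"
        using q xi hs_unit_left[of "fst q" n "snd q" "E \<xi> \<alpha> i"] hs_cnj[of "E \<xi> \<alpha> i" n "?U q"]
        by (auto simp: QQ_def)
      thus "cnj (hs_inner (E \<xi> \<alpha> i) (?U q)) * hs_inner (E \<xi> \<beta> i) (T \<rho> \<mu> \<nu> (?U q)) =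
          E \<xi> \<alpha> i $$ q * hs_inner (E \<xi> \<beta> i) (T \<rho> \<mu> \<nu> (?U q))" by simp
    qed
  qed
  also have "\<dots> = (\<Sum>i<d \<xi>. \<Sum>q\<in>QQ n. E \<xi> \<alpha> i $$ q * hs_inner (E \<xi> \<beta> i) (T \<rho> \<mu> \<nu> (?U q)))"
    by (rule sum.swap)
  also have "\<dots> = (\<Sum>i<d \<xi>. tau \<rho> \<mu> \<nu> \<xi> \<beta> i \<xi> \<alpha> i)"
  proof (intro sum.cong refl)
    fix i assume i: "i \<in> {..<d \<xi>}"
    have "T \<rho> \<mu> \<nu> (E \<xi> \<alpha> i) = T \<rho> \<mu> \<nu> (lincomb_m n (QQ n) (\<lambda>q. E \<xi> \<alpha> i $$ q) ?U)"
      using unit_expand[of "E \<xi> \<alpha> i" n] xi i by simp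
    also have "\<dots> = lincomb_m n (QQ n) (\<lambda>q. E \<xi> \<alpha> i $$ q) (\<lambda>q. T \<rho> \<mu> \<nu> (?U q))"
      by (rule T_lincomb[OF r]) auto
    finally show "(\<Sum>q\<in>QQ n. E \<xi> \<alpha> i $$ q * hs_inner (E \<xi> \<beta> i) (T \<rho> \<mu> \<nu> (?U q))) = tau \<rho> \<mu> \<nu> \<xi> \<beta> i \<xi> \<alpha> i"
      unfolding tau_def using xi i by (simp add: hs_lincomb_right)
  qed
  finally show ?thesis .
qed

lemma MacW_lamb: assumes r: "\<rho> \<in> Xi" "\<mu> < m \<rho>" "\<nu> < m \<rho>" and xi: "\<xi> \<in> Xi" "\<alpha> < m \<xi>" "\<beta> < m \<xi>"
  shows "MacW n d E (\<xi>,\<alpha>,\<beta>) (\<rho>,\<mu>,\<nu>) = lamb \<rho> \<mu> \<nu> \<xi> \<alpha> \<beta>"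
  unfolding MacW_def lamb_def using super_Pi_T[OF assms] by simp

abbreviation ee where "ee \<equiv> (\<lambda>(\<xi>,\<alpha>,i). E \<xi> \<alpha> i)"

lemma onf_all: "onf n (idx Xi m d) ee"
  unfolding onf_def using finite_idx[OF finXi] IDc(3,4) by auto

lemma expand_all: assumes "X \<in> carrier_mat n n"
  shows "X = lincomb_m n (idx Xi m d) (\<lambda>p. hs_inner (ee p) X) ee"
proof -
  have "X \<in> span_m n (idx Xi m d) ee" using IDc(5) assms by simp
  then obtain c where "X = lincomb_m n (idx Xi m d) c ee" unfolding span_m_def by auto
  thus ?thesis using onf_expand[OF onf_all] by blast
qed

lemma ee_car: "p \<in> idx Xi m d \<Longrightarrow> ee p \<in> carrier_mat n n"
  using onf_all unfolding onf_def by auto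

lemma A_entry: assumes "\<xi> \<in> Xi" "\<alpha> < m \<xi>" "\<beta> < m \<xi>" "X \<in> carrier_mat n n"
  shows "A_enum n m d E X \<xi> $$ (\<alpha>,\<beta>) = (\<Sum>i<d \<xi>. hs_inner (E \<xi> \<alpha> i) X * cnj (hs_inner (E \<xi> \<beta> i) X))"
proof -
  have "A_enum n m d E X \<xi> $$ (\<alpha>,\<beta>) = hs_inner X (Pi \<xi> \<alpha> \<beta> X)" using assms by (simp add: A_enum_def)
  also have "\<dots> = (\<Sum>i<d \<xi>. hs_inner (E \<xi> \<alpha> i) X * hs_inner X (E \<xi> \<beta> i))"
    unfolding Pi_unit_def by (rule hs_lincomb_right) (use assms in auto)
  also have "\<dots> = (\<Sum>i<d \<xi>. hs_inner (E \<xi> \<alpha> i) X * cnj (hs_inner (E \<xi> \<beta> i) X))"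
    using assms by (intro sum.cong refl) (simp add: hs_cnj[of "E \<xi> \<beta> _" n X])
  finally show ?thesis .
qed

lemma B_entry: assumes "\<rho> \<in> Xi" "\<mu> < m \<rho>" "\<nu> < m \<rho>"
  shows "B_enum n m d E X \<rho> $$ (\<mu>,\<nu>) = hs_inner X (T \<rho> \<mu> \<nu> X)"
  using assms by (simp add: B_enum_def)

lemma macwilliams: assumes r: "\<rho> \<in> Xi" "\<mu> < m \<rho>" "\<nu> < m \<rho>" and X: "X \<in> carrier_mat n n"
  shows "B_enum n m d E X \<rho> $$ (\<mu>,\<nu>) = (\<Sum>\<xi>\<in>Xi. \<Sum>\<alpha><m \<xi>. \<Sum>\<beta><m \<xi>.
            MacW n d E (\<xi>,\<alpha>,\<beta>) (\<rho>,\<mu>,\<nu>) * A_enum n m d E X \<xi> $$ (\<alpha>,\<beta>))"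
proof -
  let ?N = "idx Xi m d"
  define c where "c p = hs_inner (ee p) X" for p
  have fin: "finite ?N" using finite_idx[OF finXi] .
  have "hs_inner X (T \<rho> \<mu> \<nu> X) = hs_inner X (T \<rho> \<mu> \<nu> (lincomb_m n ?N c ee))"
    using expand_all[OF X] unfolding c_def by simp
  also have "\<dots> = hs_inner X (lincomb_m n ?N c (\<lambda>q. T \<rho> \<mu> \<nu> (ee q)))"
    using T_lincomb[OF r fin ee_car] by simp
  also have "\<dots> = (\<Sum>q\<in>?N. c q * hs_inner X (T \<rho> \<mu> \<nu> (ee q)))"
    by (rule hs_lincomb_right) (use X fin in auto)
  also have "\<dots> = (\<Sum>q\<in>?N. \<Sum>p\<in>?N. c q * cnj (c p) * hs_inner (ee p) (T \<rho> \<mu> \<nu> (ee q)))"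
  proof (intro sum.cong refl)
    fix q assume "q \<in> ?N"
    have "hs_inner X (T \<rho> \<mu> \<nu> (ee q)) = hs_inner (lincomb_m n ?N c ee) (T \<rho> \<mu> \<nu> (ee q))"
      using expand_all[OF X] unfolding c_def by simp
    also have "\<dots> = (\<Sum>p\<in>?N. cnj (c p) * hs_inner (ee p) (T \<rho> \<mu> \<nu> (ee q)))"
      by (rule hs_lincomb_left) (use fin ee_car in auto)
    finally show "c q * hs_inner X (T \<rho> \<mu> \<nu> (ee q)) = (\<Sum>p\<in>?N. c q * cnj (c p) * hs_inner (ee p) (T \<rho> \<mu> \<nu> (ee q)))"
      by (simp add: sum_distrib_left mult_ac)
  qed
  also have "\<dots> = (\<Sum>\<xi>\<in>Xi. \<Sum>\<alpha><m \<xi>. \<Sum>i<d \<xi>. \<Sum>\<xi>'\<in>Xi. \<Sum>\<beta><m \<xi>'. \<Sum>i'<d \<xi>'.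
        c (\<xi>,\<alpha>,i) * cnj (c (\<xi>',\<beta>,i')) * tau \<rho> \<mu> \<nu> \<xi>' \<beta> i' \<xi> \<alpha> i)"
    by (simp add: sum_idx[OF finXi] tau_def)
  also have "\<dots> = (\<Sum>\<xi>\<in>Xi. \<Sum>\<alpha><m \<xi>. \<Sum>i<d \<xi>. \<Sum>\<beta><m \<xi>.
        c (\<xi>,\<alpha>,i) * cnj (c (\<xi>,\<beta>,i)) * lamb \<rho> \<mu> \<nu> \<xi> \<alpha> \<beta>)"
  proof (intro sum.cong refl)
    fix \<xi> \<alpha> i assume xi: "\<xi> \<in> Xi" and a: "\<alpha> \<in> {..<m \<xi>}" and i: "i \<in> {..<d \<xi>}"
    have "(\<Sum>\<xi>'\<in>Xi. \<Sum>\<beta><m \<xi>'. \<Sum>i'<d \<xi>'. c (\<xi>,\<alpha>,i) * cnj (c (\<xi>',\<beta>,i')) * tau \<rho> \<mu> \<nu> \<xi>' \<beta> i' \<xi> \<alpha> i)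
       = (\<Sum>\<xi>'\<in>Xi. \<Sum>\<beta><m \<xi>'. \<Sum>i'<d \<xi>'. if \<xi>' = \<xi> \<and> i' = i then
            c (\<xi>,\<alpha>,i) * cnj (c (\<xi>',\<beta>,i')) * lamb \<rho> \<mu> \<nu> \<xi> \<alpha> \<beta> else 0)"
      using tau_form[OF r xi] a i by (intro sum.cong refl) auto
    also have "\<dots> = (\<Sum>\<beta><m \<xi>. c (\<xi>,\<alpha>,i) * cnj (c (\<xi>,\<beta>,i)) * lamb \<rho> \<mu> \<nu> \<xi> \<alpha> \<beta>)"
      using collapse3[OF finXi xi, where m=m and d=d and i=i and F="\<lambda>\<xi>' \<beta> i'. c (\<xi>,\<alpha>,i) * cnj (c (\<xi>',\<beta>,i')) * lamb \<rho> \<mu> \<nu> \<xi> \<alpha> \<beta>"] i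
      by simp
    finally show "(\<Sum>\<xi>'\<in>Xi. \<Sum>\<beta><m \<xi>'. \<Sum>i'<d \<xi>'. c (\<xi>,\<alpha>,i) * cnj (c (\<xi>',\<beta>,i')) * tau \<rho> \<mu> \<nu> \<xi>' \<beta> i' \<xi> \<alpha> i)
       = (\<Sum>\<beta><m \<xi>. c (\<xi>,\<alpha>,i) * cnj (c (\<xi>,\<beta>,i)) * lamb \<rho> \<mu> \<nu> \<xi> \<alpha> \<beta>)" .
  qed
  also have "\<dots> = (\<Sum>\<xi>\<in>Xi. \<Sum>\<alpha><m \<xi>. \<Sum>\<beta><m \<xi>.
            MacW n d E (\<xi>,\<alpha>,\<beta>) (\<rho>,\<mu>,\<nu>) * A_enum n m d E X \<xi> $$ (\<alpha>,\<beta>))"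
  proof (rule sum.cong[OF refl], rule sum.cong[OF refl])
    fix \<xi> \<alpha> assume xi: "\<xi> \<in> Xi" and a: "\<alpha> \<in> {..<m \<xi>}"
    have "(\<Sum>i<d \<xi>. \<Sum>\<beta><m \<xi>. c (\<xi>,\<alpha>,i) * cnj (c (\<xi>,\<beta>,i)) * lamb \<rho> \<mu> \<nu> \<xi> \<alpha> \<beta>)
        = (\<Sum>\<beta><m \<xi>. \<Sum>i<d \<xi>. c (\<xi>,\<alpha>,i) * cnj (c (\<xi>,\<beta>,i)) * lamb \<rho> \<mu> \<nu> \<xi> \<alpha> \<beta>)"
      by (rule sum.swap)
    also have "\<dots> = (\<Sum>\<beta><m \<xi>. MacW n d E (\<xi>,\<alpha>,\<beta>) (\<rho>,\<mu>,\<nu>) * A_enum n m d E X \<xi> $$ (\<alpha>,\<beta>))"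
    proof (intro sum.cong refl)
      fix \<beta> assume b: "\<beta> \<in> {..<m \<xi>}"
      show "(\<Sum>i<d \<xi>. c (\<xi>,\<alpha>,i) * cnj (c (\<xi>,\<beta>,i)) * lamb \<rho> \<mu> \<nu> \<xi> \<alpha> \<beta>) =
          MacW n d E (\<xi>,\<alpha>,\<beta>) (\<rho>,\<mu>,\<nu>) * A_enum n m d E X \<xi> $$ (\<alpha>,\<beta>)"
        using a b xi X MacW_lamb[OF r xi(1)]
        by (simp add: A_entry c_def sum_distrib_left mult_ac)
    qed
    finally show "(\<Sum>i<d \<xi>. \<Sum>\<beta><m \<xi>. c (\<xi>,\<alpha>,i) * cnj (c (\<xi>,\<beta>,i)) * lamb \<rho> \<mu> \<nu> \<xi> \<alpha> \<beta>)
        = (\<Sum>\<beta><m \<xi>. MacW n d E (\<xi>,\<alpha>,\<beta>) (\<rho>,\<mu>,\<nu>) * A_enum n m d E X \<xi> $$ (\<alpha>,\<beta>))" .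
  qed
  finally show ?thesis using B_entry[OF r] by simp
qed
end

context mwsetup begin

lemma completeness: assumes "q \<in> QQ n" "q' \<in> QQ n"
  shows "(\<Sum>p\<in>idx Xi m d. cnj (ee p $$ q) * ee p $$ q') = (if q = q' then 1 else 0)"
proof -
  let ?U = "mat_unit n (fst q) (snd q)"
  have U: "?U = lincomb_m n (idx Xi m d) (\<lambda>p. hs_inner (ee p) ?U) ee" by (rule expand_all) simp
  have "(if q = q' then 1 else 0) = ?U $$ q'" using assms by (cases q, cases q') (auto simp: mat_unit_def QQ_def)
  also have "\<dots> = (\<Sum>p\<in>idx Xi m d. hs_inner (ee p) ?U * ee p $$ q')"
    using arg_cong[OF U, of "\<lambda>M. M $$ q'"] lincomb_indexQ[OF assms(2)] by simp
  also have "\<dots> = (\<Sum>p\<in>idx Xi m d. cnj (ee p $$ q) * ee p $$ q')"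
  proof (rule sum.cong[OF refl])
    fix p assume p: "p \<in> idx Xi m d"
    have "hs_inner (ee p) ?U = cnj (hs_inner ?U (ee p))" using ee_car[OF p] by (subst hs_cnj[of ?U n]) auto
    also have "\<dots> = cnj (ee p $$ q)" using assms ee_car[OF p] by (cases q) (simp add: hs_unit_left QQ_def)
    finally show "hs_inner (ee p) ?U * ee p $$ q' = cnj (ee p $$ q) * ee p $$ q'" by simp
  qed
  finally show ?thesis by simp
qed

lemma twirl_all: assumes Y: "Y \<in> carrier_mat n n"
  shows "lincomb_m n (idx Xi m d) (\<lambda>p. 1) (\<lambda>p. adj (ee p) * Y * ee p) = mtrace Y \<cdot>\<^sub>m 1\<^sub>m n"
proof (rule eq_matI)
  fix a b assume "a < dim_row (mtrace Y \<cdot>\<^sub>m 1\<^sub>m n)" "b < dim_col (mtrace Y \<cdot>\<^sub>m 1\<^sub>m n)"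
  hence ab: "a < n" "b < n" by auto
  let ?N = "idx Xi m d"
  have "lincomb_m n ?N (\<lambda>p. 1) (\<lambda>p. adj (ee p) * Y * ee p) $$ (a,b)
     = (\<Sum>p\<in>?N. \<Sum>k<n. \<Sum>l<n. cnj (ee p $$ (k,a)) * Y $$ (k,l) * ee p $$ (l,b))"
    using ab Y by (auto simp: lincomb_index mult3_index[OF adj_carrier[OF ee_car] Y ee_car] adj_index_c[OF ee_car]
       simp del: massoc intro!: sum.cong)
  also have "\<dots> = (\<Sum>k<n. \<Sum>p\<in>?N. \<Sum>l<n. cnj (ee p $$ (k,a)) * Y $$ (k,l) * ee p $$ (l,b))"
    by (rule sum.swap)
  also have "\<dots> = (\<Sum>k<n. \<Sum>l<n. \<Sum>p\<in>?N. cnj (ee p $$ (k,a)) * Y $$ (k,l) * ee p $$ (l,b))"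
    by (rule sum.cong[OF refl]) (rule sum.swap)
  also have "\<dots> = (\<Sum>k<n. \<Sum>l<n. Y $$ (k,l) * (\<Sum>p\<in>?N. cnj (ee p $$ (k,a)) * ee p $$ (l,b)))"
    by (simp add: sum_distrib_left mult_ac)
  also have "\<dots> = (\<Sum>k<n. \<Sum>l<n. Y $$ (k,l) * (if (k,a) = (l,b) then 1 else 0))"
    using ab by (intro sum.cong refl) (simp add: completeness QQ_def)
  also have "\<dots> = (\<Sum>k<n. if a = b then Y $$ (k,k) else 0)"
    by (intro sum.cong refl) auto
  also have "\<dots> = (mtrace Y \<cdot>\<^sub>m 1\<^sub>m n) $$ (a,b)"
    using ab Y by (auto simp: mtrace_def)
  finally show "lincomb_m n ?N (\<lambda>p. 1) (\<lambda>p. adj (ee p) * Y * ee p) $$ (a,b) = (mtrace Y \<cdot>\<^sub>m 1\<^sub>m n) $$ (a,b)" .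
qed auto

end

locale mwP = mwsetup G rep n Xi m d E
  for G :: "('g, 'b) monoid_scheme" and rep :: "'g \<Rightarrow> complex mat" and n :: nat
    and Xi :: "'x set" and m d :: "'x \<Rightarrow> nat" and E :: "'x \<Rightarrow> nat \<Rightarrow> nat \<Rightarrow> complex mat" +
  fixes K :: nat and c :: "nat \<Rightarrow> complex vec"
  assumes ON: "orthonormal_family n K c"
begin

abbreviation P where "P \<equiv> proj_of n K c"

lemma Pidem[simp]: "P * P = P" using P_idem[OF ON] .
lemma Ptr: "mtrace P = of_nat K" using P_trace[OF ON] .

lemma hsP: "Y \<in> carrier_mat n n \<Longrightarrow> hs_inner P Y = mtrace (P * Y)"
  unfolding hs_inner_def by (simp add: P_adj)

lemma tr_PXP: assumes "X \<in> carrier_mat n n" shows "mtrace (P * X * P) = mtrace (P * X)"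
proof -
  have "mtrace ((P * X) * P) = mtrace (P * (P * X))" using assms by (intro mtrace_comm[of _ n]) auto
  also have "P * (P * X) = P * X" using assms by (simp add: assoc_mult_mat[symmetric, of P n n P n X n])
  finally show ?thesis by simp
qed

lemma hsPP: "hs_inner P P = of_nat K" using hsP[OF P_car] Ptr by simp


lemma Pidem2[simp]: "Z \<in> carrier_mat n n \<Longrightarrow> P * (P * Z) = P * Z"
  by (simp add: assoc_mult_mat[symmetric, of P n n P n Z n])

lemma PF_term: assumes F: "F \<in> carrier_mat n n"
  shows "Im (of_nat K * hs_inner P (adj F * P * F) - cnj (hs_inner P F) * hs_inner P F) = 0 \<and>
         0 \<le> Re (of_nat K * hs_inner P (adj F * P * F) - cnj (hs_inner P F) * hs_inner P F)"
proof -
  define Y where "Y = P * F * P"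
  have Y: "Y \<in> carrier_mat n n" using F by (simp add: Y_def)
  have e1: "hs_inner P (adj F * P * F) = hs_inner Y Y"
  proof -
    have "hs_inner Y Y = mtrace (P * (adj F * P * F) * P)"
      unfolding hs_inner_def Y_def using F by (simp add: adj_mult[of _ n n _ n] P_adj)
    also have "\<dots> = mtrace (P * (adj F * P * F))" using F by (intro tr_PXP) simp
    also have "\<dots> = hs_inner P (adj F * P * F)" using F by (simp add: hsP)
    finally show ?thesis by simp
  qed
  have e2: "hs_inner P F = hs_inner P Y"
  proof -
    have "hs_inner P F = mtrace (P * F * P)" using F tr_PXP[OF F] by (simp add: hsP)
    also have "\<dots> = hs_inner P Y" unfolding Y_def using F by (simp add: hsP)
    finally show ?thesis .
  qed
  define r where "r = (\<Sum>q\<in>QQ n. (cmod (Y $$ q))^2)"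
  have hY: "hs_inner Y Y = of_real r" unfolding r_def using hs_self[OF Y] .
  have cs: "(cmod (hs_inner P Y))^2 \<le> of_nat K * r"
    using hs_cs[OF P_car[of n K c] Y] hsPP hY by simp
  have cz: "cnj (hs_inner P F) * hs_inner P F = of_real ((cmod (hs_inner P F))^2)"
    by (simp add: complex_norm_square mult.commute del: of_real_power)
  show ?thesis unfolding e1 hY cz using cs e2 by simp
qed

lemma AB_dims[simp]: "dim_row (A_enum n m d E X \<xi>) = m \<xi>" "dim_col (A_enum n m d E X \<xi>) = m \<xi>"
  "dim_row (B_enum n m d E X \<xi>) = m \<xi>" "dim_col (B_enum n m d E X \<xi>) = m \<xi>"
  by (simp_all add: A_enum_def B_enum_def)

lemma AB_car[simp]: "A_enum n m d E X \<xi> \<in> carrier_mat (m \<xi>) (m \<xi>)" "B_enum n m d E X \<xi> \<in> carrier_mat (m \<xi>) (m \<xi>)"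
  by (simp_all add: A_enum_def B_enum_def)

lemma A_herm: assumes xi: "\<xi> \<in> Xi" shows "hermitian (A_enum n m d E P \<xi>)"
  unfolding hermitian_def
proof
  show "dim_row (A_enum n m d E P \<xi>) = dim_col (A_enum n m d E P \<xi>)" by (simp add: A_enum_def)
  show "adj (A_enum n m d E P \<xi>) = A_enum n m d E P \<xi>"
  proof (rule eq_matI)
    fix a b assume "a < dim_row (A_enum n m d E P \<xi>)" "b < dim_col (A_enum n m d E P \<xi>)"
    hence ab: "a < m \<xi>" "b < m \<xi>" by (auto simp: A_enum_def)
    thus "adj (A_enum n m d E P \<xi>) $$ (a,b) = A_enum n m d E P \<xi> $$ (a,b)"
      using xi by (simp add: A_entry mult.commute)
  qed (auto simp: A_enum_def)
qed

lemma B_entry2: assumes "\<rho> \<in> Xi" "\<mu> < m \<rho>" "\<nu> < m \<rho>"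
  shows "B_enum n m d E P \<rho> $$ (\<mu>,\<nu>) = (\<Sum>i<d \<rho>. hs_inner P (adj (E \<rho> \<mu> i) * P * E \<rho> \<nu> i))"
  unfolding B_entry[OF assms] Twirl_unit_def
  by (subst hs_lincomb_right) (use assms in auto)

lemma herm_term: assumes "Y \<in> carrier_mat n n" "Z \<in> carrier_mat n n"
  shows "cnj (hs_inner P (adj Y * P * Z)) = hs_inner P (adj Z * P * Y)"
proof -
  have "cnj (hs_inner P (adj Y * P * Z)) = hs_inner (adj Y * P * Z) P"
    using assms by (subst hs_cnj[of P n]) auto
  also have "\<dots> = mtrace ((adj Z * P * Y) * P)"
    unfolding hs_inner_def using assms by (simp add: adj_mult[of _ n n _ n] P_adj)
  also have "\<dots> = mtrace (P * (adj Z * P * Y))" using assms by (intro mtrace_comm[of _ n]) auto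
  also have "\<dots> = hs_inner P (adj Z * P * Y)" using assms by (simp add: hsP)
  finally show ?thesis .
qed

lemma B_herm: assumes xi: "\<xi> \<in> Xi" shows "hermitian (B_enum n m d E P \<xi>)"
  unfolding hermitian_def
proof
  show "dim_row (B_enum n m d E P \<xi>) = dim_col (B_enum n m d E P \<xi>)" by (simp add: B_enum_def)
  show "adj (B_enum n m d E P \<xi>) = B_enum n m d E P \<xi>"
  proof (rule eq_matI)
    fix a b assume "a < dim_row (B_enum n m d E P \<xi>)" "b < dim_col (B_enum n m d E P \<xi>)"
    hence ab: "a < m \<xi>" "b < m \<xi>" by (auto simp: B_enum_def)
    have "adj (B_enum n m d E P \<xi>) $$ (a,b) = cnj (B_enum n m d E P \<xi> $$ (b,a))"
      using ab by simp
    also have "\<dots> = (\<Sum>i<d \<xi>. cnj (hs_inner P (adj (E \<xi> b i) * P * E \<xi> a i)))"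
      using B_entry2[OF xi ab(2,1)] by simp
    also have "\<dots> = B_enum n m d E P \<xi> $$ (a,b)"
      using B_entry2[OF xi ab] xi ab herm_term by (auto intro!: sum.cong)
    finally show "adj (B_enum n m d E P \<xi>) $$ (a,b) = B_enum n m d E P \<xi> $$ (a,b)" .
  qed (auto simp: B_enum_def)
qed

definition FF where "FF \<xi> v i = lincomb_m n {..<m \<xi>} (\<lambda>\<beta>. v $ \<beta>) (\<lambda>\<beta>. E \<xi> \<beta> i)"

lemma FF_car[simp]: "FF \<xi> v i \<in> carrier_mat n n" by (simp add: FF_def)

lemma hsP_FF: assumes "\<xi> \<in> Xi" "i < d \<xi>"
  shows "hs_inner P (FF \<xi> v i) = (\<Sum>\<beta><m \<xi>. v $ \<beta> * cnj (hs_inner (E \<xi> \<beta> i) P))"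
proof -
  have "hs_inner P (FF \<xi> v i) = (\<Sum>\<beta><m \<xi>. v $ \<beta> * hs_inner P (E \<xi> \<beta> i))"
    unfolding FF_def by (rule hs_lincomb_right) (use assms in auto)
  also have "\<dots> = (\<Sum>\<beta><m \<xi>. v $ \<beta> * cnj (hs_inner (E \<xi> \<beta> i) P))"
    using assms by (intro sum.cong refl) (subst hs_cnj[of P n], auto)
  finally show ?thesis .
qed

lemma qA: assumes xi: "\<xi> \<in> Xi" and v: "v \<in> carrier_vec (m \<xi>)"
  shows "(A_enum n m d E P \<xi> *\<^sub>v v) \<bullet>c v = (\<Sum>i<d \<xi>. cnj (hs_inner P (FF \<xi> v i)) * hs_inner P (FF \<xi> v i))"
proof -
  define a where "a \<alpha> i = hs_inner (E \<xi> \<alpha> i) P" for \<alpha> i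
  have "(A_enum n m d E P \<xi> *\<^sub>v v) \<bullet>c v = (\<Sum>\<alpha><m \<xi>. \<Sum>\<beta><m \<xi>. (\<Sum>i<d \<xi>. a \<alpha> i * cnj (a \<beta> i)) * v $ \<beta> * cnj (v $ \<alpha>))"
    using qform[OF AB_car(1) v] xi unfolding a_def by (auto simp: A_entry intro!: sum.cong)
  also have "\<dots> = (\<Sum>\<alpha><m \<xi>. \<Sum>\<beta><m \<xi>. \<Sum>i<d \<xi>. (cnj (v $ \<alpha>) * a \<alpha> i) * (v $ \<beta> * cnj (a \<beta> i)))"
    by (simp add: sum_distrib_left sum_distrib_right mult_ac)
  also have "\<dots> = (\<Sum>\<alpha><m \<xi>. \<Sum>i<d \<xi>. \<Sum>\<beta><m \<xi>. (cnj (v $ \<alpha>) * a \<alpha> i) * (v $ \<beta> * cnj (a \<beta> i)))"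
    by (rule sum.cong[OF refl]) (rule sum.swap)
  also have "\<dots> = (\<Sum>i<d \<xi>. \<Sum>\<alpha><m \<xi>. \<Sum>\<beta><m \<xi>. (cnj (v $ \<alpha>) * a \<alpha> i) * (v $ \<beta> * cnj (a \<beta> i)))"
    by (rule sum.swap)
  also have "\<dots> = (\<Sum>i<d \<xi>. (\<Sum>\<alpha><m \<xi>. cnj (v $ \<alpha>) * a \<alpha> i) * (\<Sum>\<beta><m \<xi>. v $ \<beta> * cnj (a \<beta> i)))"
    by (simp add: sum_product)
  also have "\<dots> = (\<Sum>i<d \<xi>. cnj (hs_inner P (FF \<xi> v i)) * hs_inner P (FF \<xi> v i))"
    using xi by (intro sum.cong refl) (simp add: hsP_FF a_def)
  finally show ?thesis .
qed

lemma qB: assumes xi: "\<xi> \<in> Xi" and v: "v \<in> carrier_vec (m \<xi>)"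
  shows "(B_enum n m d E P \<xi> *\<^sub>v v) \<bullet>c v = (\<Sum>i<d \<xi>. hs_inner P (adj (FF \<xi> v i) * P * FF \<xi> v i))"
proof -
  define b where "b \<alpha> \<beta> i = hs_inner P (adj (E \<xi> \<alpha> i) * P * E \<xi> \<beta> i)" for \<alpha> \<beta> i
  have "(B_enum n m d E P \<xi> *\<^sub>v v) \<bullet>c v = (\<Sum>\<alpha><m \<xi>. \<Sum>\<beta><m \<xi>. (\<Sum>i<d \<xi>. b \<alpha> \<beta> i) * v $ \<beta> * cnj (v $ \<alpha>))"
    using qform[OF AB_car(2) v] xi unfolding b_def by (auto simp: B_entry2 simp del: massoc intro!: sum.cong)
  also have "\<dots> = (\<Sum>\<alpha><m \<xi>. \<Sum>\<beta><m \<xi>. \<Sum>i<d \<xi>. cnj (v $ \<alpha>) * (v $ \<beta> * b \<alpha> \<beta> i))"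
    by (simp add: sum_distrib_left sum_distrib_right mult_ac)
  also have "\<dots> = (\<Sum>\<alpha><m \<xi>. \<Sum>i<d \<xi>. \<Sum>\<beta><m \<xi>. cnj (v $ \<alpha>) * (v $ \<beta> * b \<alpha> \<beta> i))"
    by (rule sum.cong[OF refl]) (rule sum.swap)
  also have "\<dots> = (\<Sum>i<d \<xi>. \<Sum>\<alpha><m \<xi>. \<Sum>\<beta><m \<xi>. cnj (v $ \<alpha>) * (v $ \<beta> * b \<alpha> \<beta> i))"
    by (rule sum.swap)
  also have "\<dots> = (\<Sum>i<d \<xi>. hs_inner P (adj (FF \<xi> v i) * P * FF \<xi> v i))"
  proof (rule sum.cong[OF refl])
    fix i assume i: "i \<in> {..<d \<xi>}"
    have "adj (FF \<xi> v i) * P * FF \<xi> v i = lincomb_m n {..<m \<xi>} (\<lambda>\<alpha>. cnj (v $ \<alpha>))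
        (\<lambda>\<alpha>. lincomb_m n {..<m \<xi>} (\<lambda>\<beta>. v $ \<beta>) (\<lambda>\<beta>. adj (E \<xi> \<alpha> i) * P * E \<xi> \<beta> i))"
      unfolding FF_def by (rule sandwich_lincomb) (use xi i in auto)
    hence "hs_inner P (adj (FF \<xi> v i) * P * FF \<xi> v i) = (\<Sum>\<alpha><m \<xi>. cnj (v $ \<alpha>) *
        hs_inner P (lincomb_m n {..<m \<xi>} (\<lambda>\<beta>. v $ \<beta>) (\<lambda>\<beta>. adj (E \<xi> \<alpha> i) * P * E \<xi> \<beta> i)))"
      by (simp del: massoc add: hs_lincomb_right)
    also have "\<dots> = (\<Sum>\<alpha><m \<xi>. \<Sum>\<beta><m \<xi>. cnj (v $ \<alpha>) * (v $ \<beta> * b \<alpha> \<beta> i))"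
    proof (rule sum.cong[OF refl])
      fix \<alpha> assume "\<alpha> \<in> {..<m \<xi>}"
      have "hs_inner P (lincomb_m n {..<m \<xi>} (\<lambda>\<beta>. v $ \<beta>) (\<lambda>\<beta>. adj (E \<xi> \<alpha> i) * P * E \<xi> \<beta> i))
          = (\<Sum>\<beta><m \<xi>. v $ \<beta> * b \<alpha> \<beta> i)"
        unfolding b_def by (rule hs_lincomb_right) (use xi i \<open>\<alpha> \<in> {..<m \<xi>}\<close> in auto)
      thus "cnj (v $ \<alpha>) * hs_inner P (lincomb_m n {..<m \<xi>} (\<lambda>\<beta>. v $ \<beta>) (\<lambda>\<beta>. adj (E \<xi> \<alpha> i) * P * E \<xi> \<beta> i))
          = (\<Sum>\<beta><m \<xi>. cnj (v $ \<alpha>) * (v $ \<beta> * b \<alpha> \<beta> i))"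
        by (simp add: sum_distrib_left)
    qed
    finally show "(\<Sum>\<alpha><m \<xi>. \<Sum>\<beta><m \<xi>. cnj (v $ \<alpha>) * (v $ \<beta> * b \<alpha> \<beta> i)) = hs_inner P (adj (FF \<xi> v i) * P * FF \<xi> v i)"
      by simp
  qed
  finally show ?thesis .
qed

lemma A_psd: assumes xi: "\<xi> \<in> Xi" shows "loewner_le (0\<^sub>m (m \<xi>) (m \<xi>)) (A_enum n m d E P \<xi>)"
  unfolding loewner_le_def
proof (intro exI[of _ "m \<xi>"] conjI ballI)
  fix v :: "complex vec" assume v: "v \<in> carrier_vec (m \<xi>)"
  have e: "A_enum n m d E P \<xi> - 0\<^sub>m (m \<xi>) (m \<xi>) = A_enum n m d E P \<xi>" by (intro eq_matI) auto
  have q: "((A_enum n m d E P \<xi> - 0\<^sub>m (m \<xi>) (m \<xi>)) *\<^sub>v v) \<bullet>c v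
      = of_real (\<Sum>i<d \<xi>. (cmod (hs_inner P (FF \<xi> v i)))^2)"
    unfolding e qA[OF xi v] of_real_sum
    by (intro sum.cong refl) (simp add: complex_norm_square mult.commute del: of_real_power)
  show "Im (((A_enum n m d E P \<xi> - 0\<^sub>m (m \<xi>) (m \<xi>)) *\<^sub>v v) \<bullet>c v) = 0" unfolding q by simp
  show "0 \<le> Re (((A_enum n m d E P \<xi> - 0\<^sub>m (m \<xi>) (m \<xi>)) *\<^sub>v v) \<bullet>c v)" unfolding q by (simp add: sum_nonneg)
qed auto

lemma AKB: assumes xi: "\<xi> \<in> Xi" shows "loewner_le (A_enum n m d E P \<xi>) (of_nat K \<cdot>\<^sub>m B_enum n m d E P \<xi>)"
  unfolding loewner_le_def
proof (intro exI[of _ "m \<xi>"] conjI ballI)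
  fix v :: "complex vec" assume v: "v \<in> carrier_vec (m \<xi>)"
  let ?A = "A_enum n m d E P \<xi>" and ?B = "B_enum n m d E P \<xi>"
  have "((of_nat K \<cdot>\<^sub>m ?B - ?A) *\<^sub>v v) \<bullet>c v
     = (\<Sum>\<alpha><m \<xi>. \<Sum>\<beta><m \<xi>. (of_nat K * ?B $$ (\<alpha>,\<beta>) - ?A $$ (\<alpha>,\<beta>)) * v $ \<beta> * cnj (v $ \<alpha>))"
  proof -
    have C: "of_nat K \<cdot>\<^sub>m ?B - ?A \<in> carrier_mat (m \<xi>) (m \<xi>)" by (intro carrier_matI) auto
    show ?thesis unfolding qform[OF C v] using v by (auto intro!: sum.cong)
  qed
  also have "\<dots> = of_nat K * (\<Sum>\<alpha><m \<xi>. \<Sum>\<beta><m \<xi>. ?B $$ (\<alpha>,\<beta>) * v $ \<beta> * cnj (v $ \<alpha>))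
       - (\<Sum>\<alpha><m \<xi>. \<Sum>\<beta><m \<xi>. ?A $$ (\<alpha>,\<beta>) * v $ \<beta> * cnj (v $ \<alpha>))"
    by (simp add: sum_distrib_left sum_subtractf algebra_simps)
  also have "\<dots> = of_nat K * ((?B *\<^sub>v v) \<bullet>c v) - ((?A *\<^sub>v v) \<bullet>c v)"
    using qform[OF AB_car(1) v] qform[OF AB_car(2) v] by simp
  also have "\<dots> = (\<Sum>i<d \<xi>. of_nat K * hs_inner P (adj (FF \<xi> v i) * P * FF \<xi> v i)
        - cnj (hs_inner P (FF \<xi> v i)) * hs_inner P (FF \<xi> v i))"
    unfolding qA[OF xi v] qB[OF xi v] by (simp add: sum_distrib_left sum_subtractf)
  finally have q: "((of_nat K \<cdot>\<^sub>m ?B - ?A) *\<^sub>v v) \<bullet>c v = (\<Sum>i<d \<xi>. of_nat K * hs_inner P (adj (FF \<xi> v i) * P * FF \<xi> v i)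
        - cnj (hs_inner P (FF \<xi> v i)) * hs_inner P (FF \<xi> v i))" .
  show "Im (((of_nat K \<cdot>\<^sub>m ?B - ?A) *\<^sub>v v) \<bullet>c v) = 0"
    unfolding q Im_sum using PF_term[OF FF_car] by (simp del: massoc)
  show "0 \<le> Re (((of_nat K \<cdot>\<^sub>m ?B - ?A) *\<^sub>v v) \<bullet>c v)"
    unfolding q Re_sum using PF_term[OF FF_car] by (intro sum_nonneg) (simp del: massoc)
qed auto

lemma mtrace_AB: "mtrace (A_enum n m d E X \<xi>) = (\<Sum>\<alpha><m \<xi>. A_enum n m d E X \<xi> $$ (\<alpha>,\<alpha>))"
  "mtrace (B_enum n m d E X \<xi>) = (\<Sum>\<alpha><m \<xi>. B_enum n m d E X \<xi> $$ (\<alpha>,\<alpha>))"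
  by (simp_all add: mtrace_def)

lemma sumTrA: "(\<Sum>\<xi>\<in>Xi. mtrace (A_enum n m d E P \<xi>)) = of_nat K"
proof -
  define cc where "cc p = hs_inner (ee p) P" for p
  have "(\<Sum>\<xi>\<in>Xi. mtrace (A_enum n m d E P \<xi>)) = (\<Sum>\<xi>\<in>Xi. \<Sum>\<alpha><m \<xi>. \<Sum>i<d \<xi>. cnj (cc (\<xi>,\<alpha>,i)) * cc (\<xi>,\<alpha>,i))"
    unfolding mtrace_AB cc_def by (intro sum.cong refl) (simp add: A_entry mult.commute)
  also have "\<dots> = (\<Sum>p\<in>idx Xi m d. cnj (cc p) * cc p)" by (simp add: sum_idx[OF finXi])
  also have "\<dots> = hs_inner (lincomb_m n (idx Xi m d) cc ee) (lincomb_m n (idx Xi m d) cc ee)"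
    by (simp add: onf_hs[OF onf_all])
  also have "\<dots> = hs_inner P P" using expand_all[OF P_car[of n K c]] unfolding cc_def by simp
  finally show ?thesis using hsPP by simp
qed

lemma sumTrB: "(\<Sum>\<xi>\<in>Xi. mtrace (B_enum n m d E P \<xi>)) = of_nat K ^ 2"
proof -
  let ?N = "idx Xi m d"
  have "(\<Sum>\<xi>\<in>Xi. mtrace (B_enum n m d E P \<xi>)) = (\<Sum>\<xi>\<in>Xi. \<Sum>\<alpha><m \<xi>. \<Sum>i<d \<xi>. hs_inner P (adj (ee (\<xi>,\<alpha>,i)) * P * ee (\<xi>,\<alpha>,i)))"
    unfolding mtrace_AB by (intro sum.cong refl) (simp add: B_entry2 del: massoc)
  also have "\<dots> = (\<Sum>p\<in>?N. 1 * hs_inner P (adj (ee p) * P * ee p))" by (simp add: sum_idx[OF finXi] del: massoc)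
  also have "\<dots> = hs_inner P (lincomb_m n ?N (\<lambda>p. 1) (\<lambda>p. adj (ee p) * P * ee p))"
    by (rule hs_lincomb_right[symmetric]) (use finite_idx[OF finXi] ee_car in auto)
  also have "\<dots> = hs_inner (1 \<cdot>\<^sub>m P) (mtrace P \<cdot>\<^sub>m 1\<^sub>m n)" by (simp add: twirl_all)
  also have "\<dots> = mtrace P * hs_inner P (1\<^sub>m n)" using hs_smult[OF P_car[of n K c] one_carrier_mat, of 1 "mtrace P"] by simp
  also have "\<dots> = of_nat K ^ 2" by (simp add: hsP Ptr power2_eq_square)
  finally show ?thesis .
qed

lemma hs_sandwich: assumes "Y \<in> carrier_mat n n" "Z \<in> carrier_mat n n"
  shows "hs_inner P (adj Y * P * Z) = hs_inner (P * Y * P) (P * Z * P)"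
proof -
  have "hs_inner (P * Y * P) (P * Z * P) = mtrace (P * (adj Y * P * Z) * P)"
    unfolding hs_inner_def using assms by (simp add: adj_mult[of _ n n _ n] P_adj)
  also have "\<dots> = mtrace (P * (adj Y * P * Z))" using assms by (intro tr_PXP) simp
  also have "\<dots> = hs_inner P (adj Y * P * Z)" using assms by (simp add: hsP)
  finally show ?thesis by simp
qed

lemma hsP_PYP: assumes "Y \<in> carrier_mat n n" shows "hs_inner P Y = hs_inner P (P * Y * P)"
  using assms tr_PXP[OF assms] by (simp add: hsP)

lemma detect_AKB: assumes xi: "\<xi> \<in> Xi" and det: "detects P (isotypic_sector n m d E \<xi>)"
  shows "A_enum n m d E P \<xi> = of_nat K \<cdot>\<^sub>m B_enum n m d E P \<xi>"
proof -
  have mem: "E \<xi> \<alpha> i \<in> isotypic_sector n m d E \<xi>" if "\<alpha> < m \<xi>" "i < d \<xi>" for \<alpha> i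
  proof -
    have "E \<xi> \<alpha> i = lincomb_m n ({..<m \<xi>} \<times> {..<d \<xi>}) (\<lambda>p. if p = (\<alpha>,i) then 1 else 0) (\<lambda>(\<alpha>,i). E \<xi> \<alpha> i)"
      using lincomb_delta[of "{..<m \<xi>} \<times> {..<d \<xi>}" "(\<alpha>,i)" "\<lambda>(\<alpha>,i). E \<xi> \<alpha> i" n] that xi by simp
    thus ?thesis unfolding isotypic_sector_def span_m_def by blast
  qed
  define \<gamma> where "\<gamma> \<alpha> i = (SOME g. P * E \<xi> \<alpha> i * P = g \<cdot>\<^sub>m P)" for \<alpha> i
  have \<gamma>: "P * E \<xi> \<alpha> i * P = \<gamma> \<alpha> i \<cdot>\<^sub>m P" if "\<alpha> < m \<xi>" "i < d \<xi>" for \<alpha> i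
  proof -
    have "\<exists>g. P * E \<xi> \<alpha> i * P = g \<cdot>\<^sub>m P" using det mem[OF that] unfolding detects_def by blast
    thus ?thesis unfolding \<gamma>_def by (rule someI_ex)
  qed
  have h1: "hs_inner P (E \<xi> \<alpha> i) = \<gamma> \<alpha> i * of_nat K" if "\<alpha> < m \<xi>" "i < d \<xi>" for \<alpha> i
  proof -
    have "hs_inner P (E \<xi> \<alpha> i) = hs_inner (1 \<cdot>\<^sub>m P) (\<gamma> \<alpha> i \<cdot>\<^sub>m P)"
      using hsP_PYP[of "E \<xi> \<alpha> i"] \<gamma>[OF that] that xi by (simp del: massoc)
    thus ?thesis using hs_smult[OF P_car[of n K c] P_car[of n K c], of 1 "\<gamma> \<alpha> i"] by (simp add: hsPP)
  qed
  have h2: "hs_inner P (adj (E \<xi> \<alpha> i) * P * E \<xi> \<beta> i) = cnj (\<gamma> \<alpha> i) * \<gamma> \<beta> i * of_nat K"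
    if "\<alpha> < m \<xi>" "\<beta> < m \<xi>" "i < d \<xi>" for \<alpha> \<beta> i
  proof -
    have "hs_inner P (adj (E \<xi> \<alpha> i) * P * E \<xi> \<beta> i) = hs_inner (\<gamma> \<alpha> i \<cdot>\<^sub>m P) (\<gamma> \<beta> i \<cdot>\<^sub>m P)"
      using hs_sandwich[of "E \<xi> \<alpha> i" "E \<xi> \<beta> i"] \<gamma>[OF that(1,3)] \<gamma>[OF that(2,3)] that xi by (simp del: massoc)
    thus ?thesis using hs_smult[OF P_car[of n K c] P_car[of n K c], of "\<gamma> \<alpha> i" "\<gamma> \<beta> i"] by (simp add: hsPP)
  qed
  show ?thesis
  proof (rule eq_matI)
    fix a b assume "a < dim_row (of_nat K \<cdot>\<^sub>m B_enum n m d E P \<xi>)" "b < dim_col (of_nat K \<cdot>\<^sub>m B_enum n m d E P \<xi>)"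
    hence ab: "a < m \<xi>" "b < m \<xi>" by auto
    have "A_enum n m d E P \<xi> $$ (a,b) = (\<Sum>i<d \<xi>. cnj (\<gamma> a i * of_nat K) * (\<gamma> b i * of_nat K))"
    proof -
      have h1': "hs_inner (E \<xi> \<alpha> i) P = cnj (\<gamma> \<alpha> i * of_nat K)" if "\<alpha> < m \<xi>" "i < d \<xi>" for \<alpha> i
        using hs_cnj[OF P_car[of n K c] Ecar[OF xi that]] h1[OF that] by simp
      show ?thesis using A_entry[OF xi ab P_car[of n K c]] ab h1' by (auto intro!: sum.cong)
    qed
    also have "\<dots> = of_nat K * (\<Sum>i<d \<xi>. cnj (\<gamma> a i) * \<gamma> b i * of_nat K)"
      by (simp add: sum_distrib_left mult_ac)
    also have "\<dots> = (of_nat K \<cdot>\<^sub>m B_enum n m d E P \<xi>) $$ (a,b)"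
      using B_entry2[OF xi ab] ab h2 by (auto simp del: massoc intro!: sum.cong)
    finally show "A_enum n m d E P \<xi> $$ (a,b) = (of_nat K \<cdot>\<^sub>m B_enum n m d E P \<xi>) $$ (a,b)" .
  qed auto
qed

lemma feasible: assumes S: "S \<subseteq> Xi" and det: "\<forall>\<xi>\<in>S. detects P (isotypic_sector n m d E \<xi>)"
  shows "mw_feasible n Xi m d E S K (A_enum n m d E P) (B_enum n m d E P)"
  unfolding mw_feasible_def
proof (intro conjI ballI allI impI)
  fix \<xi> assume xi: "\<xi> \<in> Xi"
  show "A_enum n m d E P \<xi> \<in> carrier_mat (m \<xi>) (m \<xi>)" by simp
  show "B_enum n m d E P \<xi> \<in> carrier_mat (m \<xi>) (m \<xi>)" by simp
  show "hermitian (A_enum n m d E P \<xi>)" using A_herm[OF xi] .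
  show "hermitian (B_enum n m d E P \<xi>)" using B_herm[OF xi] .
  show "loewner_le (0\<^sub>m (m \<xi>) (m \<xi>)) (A_enum n m d E P \<xi>)" using A_psd[OF xi] .
  show "loewner_le (A_enum n m d E P \<xi>) (of_nat K \<cdot>\<^sub>m B_enum n m d E P \<xi>)" using AKB[OF xi] .
next
  show "(\<Sum>\<xi>\<in>Xi. mtrace (A_enum n m d E P \<xi>)) = of_nat K" using sumTrA .
  show "(\<Sum>\<xi>\<in>Xi. mtrace (B_enum n m d E P \<xi>)) = of_nat K ^ 2" using sumTrB .
next
  fix \<rho> \<mu> \<nu> assume "\<rho> \<in> Xi" "\<mu> < m \<rho>" "\<nu> < m \<rho>"
  thus "B_enum n m d E P \<rho> $$ (\<mu>,\<nu>) = (\<Sum>\<xi>\<in>Xi. \<Sum>\<alpha><m \<xi>. \<Sum>\<beta><m \<xi>.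
          MacW n d E (\<xi>,\<alpha>,\<beta>) (\<rho>,\<mu>,\<nu>) * A_enum n m d E P \<xi> $$ (\<alpha>,\<beta>))"
    using macwilliams[OF _ _ _ P_car] by blast
next
  fix \<xi> assume "\<xi> \<in> S"
  thus "A_enum n m d E P \<xi> = of_nat K \<cdot>\<^sub>m B_enum n m d E P \<xi>" using detect_AKB S det by blast
qed
end

theorem mainTheorem19:
  fixes G :: "('g, 'b) monoid_scheme" and rep :: "'g \<Rightarrow> complex mat" and n :: nat
    and Xi :: "'x set" and m d :: "'x \<Rightarrow> nat" and E :: "'x \<Rightarrow> nat \<Rightarrow> nat \<Rightarrow> complex mat"
    and S :: "'x set" and K :: nat and c :: "nat \<Rightarrow> complex vec"
  assumes "unitary_rep G n rep"
    and "isotypic_decomposition G n rep Xi m d E"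
    and "S \<subseteq> Xi"
    and "orthonormal_family n K c"
    and "\<forall>\<xi>\<in>S. detects (proj_of n K c) (isotypic_sector n m d E \<xi>)"
  shows "mw_feasible n Xi m d E S K (A_enum n m d E (proj_of n K c)) (B_enum n m d E (proj_of n K c))
    \<and> (\<exists>A B. mw_feasible n Xi m d E S K A B)"
proof -
  interpret mwP G rep n Xi m d E K c
    by (unfold_locales) (use assms in auto)
  have "mw_feasible n Xi m d E S K (A_enum n m d E (proj_of n K c)) (B_enum n m d E (proj_of n K c))"
    using feasible assms by blast
  thus ?thesis by blast
qed

end
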